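(* In the Bayesian $k$-armed bandit problem described in the context, suppose every $P_\mu$ is $1$-subgaussian and that the Seq-Greedy algorithm is executed with parameter $\upsilon=2\delta$, where $\delta>0$. Then for any integer $1\le k_1\le k$, $$BR_{T,k}(\text{Seq-Greedy})\le T\Bigl(1-\mathbb{E}_\Gamma\bigl[\mathbf 1(\mu\ge1-\delta)q_{1-2\delta}(\mu)\bigr]\Bigr)^{k_1}+3T\delta+k_1\mathbb{E}_\Gamma\Bigl[\mathbf 1(\mu<1-3\delta)\min\Bigl(1+\frac{3}{C_1(1-2\delta-\mu)},\,T(1-\mu)\Bigr)\Bigr],$$ where $C_1=(1-e^{-1})/2$.
   Context: Bayesian $k$-armed bandit: horizon $T$, arms $[k]$, family $\{P_\mu:\mu\in[0,1]\}$ with $P_\mu$ of mean $\mu$; prior $\Gamma$ on $[0,1]$ with density; means $\mu_1,\dots,\mu_k$ i.i.d. $\sim\Gamma$; pulling arm $i$ at time $t$ gives $Y_{it}\sim P_{\mu_i}$ independently, only the pulled reward observed. $R_T(\pi\mid\bm\mu)=T\max_i\mu_i-\sum_t\mathbb{E}[\mu_{a_t}\mid\pi]$, $BR_{T,k}(\pi)=\mathbb{E}[R_T(\pi\mid\bm\mu)]$. $1$-subgaussian: $\mathbb{E}[e^{s(Z-\mu)}]\le e^{s^2/2}$ for $Z\sim P_\mu$. $\hat\mu_j(t)$ is the empirical mean reward of arm $j$ up to time $t$. Seq-Greedy with input $\upsilon$: set $i=1$ and pull arm $1$ at $t=1$; for each $t\ge2$: if $\hat\mu_i(t-1)\ge1-\upsilon$,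 pull arm $i$; else if $i<k$, pull arm $i+1$ and set $i\leftarrow i+1$; else pull $\arg\max_j\hat\mu_j(t-1)$. For $\mu>\theta$, with $X_n$ i.i.d. $\sim P_\mu$ and $M_n=\frac1n\sum_{i\le n}X_i$, $q_\theta(\mu)=\mathbb{P}[M_n>\theta\ \forall n\ge1]$. *)

theory Defs
  imports "HOL-Probability.Probability"
begin

text \<open>Rewards are held in a table Y indexed by (arm, time): pulling arm i at time t
  reveals Y (i, t).  A history hs lists the arms pulled at times 1, 2, ...,
  i.e. hs ! s is the arm pulled at time s+1.\<close>

definition emp_mean :: "(nat \<times> nat \<Rightarrow> real) \<Rightarrow> nat list \<Rightarrow> nat \<Rightarrow> real" where
  "emp_mean Y hs j =
     (\<Sum>s<length hs. if hs ! s = j then Y (j, Suc s) else 0)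
       / real (card {s. s < length hs \<and> hs ! s = j})"

text \<open>State of Seq-Greedy after t rounds: (arms pulled at times 1..t, current index i).
  Ties in the arg max are broken towards the smallest arm index.\<close>

fun sg_run :: "real \<Rightarrow> nat \<Rightarrow> (nat \<times> nat \<Rightarrow> real) \<Rightarrow> nat \<Rightarrow> nat list \<times> nat" where
  "sg_run \<upsilon> k Y 0 = ([], 1)"
| "sg_run \<upsilon> k Y (Suc t) =
     (case sg_run \<upsilon> k Y t of (hs, i) \<Rightarrow>
        if t = 0 then ([1], 1)
        else if emp_mean Y hs i \<ge> 1 - \<upsilon> then (hs @ [i], i)
        else if i < k then (hs @ [Suc i], Suc i)
        else (hs @ [LEAST j. j \<in> {1..k} \<and>
                      (\<forall>j'\<in>{1..k}. emp_mean Y hs j' \<le> emp_mean Y hs j)], i))"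

definition sg_arm :: "real \<Rightarrow> nat \<Rightarrow> (nat \<times> nat \<Rightarrow> real) \<Rightarrow> nat \<Rightarrow> nat" where
  "sg_arm \<upsilon> k Y t = fst (sg_run \<upsilon> k Y t) ! (t - 1)"

definition reward_table ::
  "(real \<Rightarrow> real measure) \<Rightarrow> nat \<Rightarrow> nat \<Rightarrow> (nat \<Rightarrow> real) \<Rightarrow> (nat \<times> nat \<Rightarrow> real) measure" where
  "reward_table P k T m = (\<Pi>\<^sub>M it\<in>{1..k} \<times> {1..T}. P (m (fst it)))"

definition sg_regret ::
  "(real \<Rightarrow> real measure) \<Rightarrow> real \<Rightarrow> nat \<Rightarrow> nat \<Rightarrow> (nat \<Rightarrow> real) \<Rightarrow> real" where
  "sg_regret P \<upsilon> k T m =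
     real T * Max (m ` {1..k})
     - (\<Sum>t\<in>{1..T}. \<integral>Y. m (sg_arm \<upsilon> k Y t) \<partial>reward_table P k T m)"

definition sg_BR ::
  "real measure \<Rightarrow> (real \<Rightarrow> real measure) \<Rightarrow> real \<Rightarrow> nat \<Rightarrow> nat \<Rightarrow> real" where
  "sg_BR \<Gamma> P \<upsilon> k T = (\<integral>m. sg_regret P \<upsilon> k T m \<partial>(\<Pi>\<^sub>M i\<in>{1..k}. \<Gamma>))"

definition q_prob :: "(real \<Rightarrow> real measure) \<Rightarrow> real \<Rightarrow> real \<Rightarrow> real" where
  "q_prob P \<theta> \<mu> =
     measure (\<Pi>\<^sub>M n\<in>(UNIV::nat set). P \<mu>)
       {x \<in> space (\<Pi>\<^sub>M n\<in>(UNIV::nat set). P \<mu>).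
          \<forall>n\<ge>1. (\<Sum>i<n. x i) / real n > \<theta>}"

end

theory Submission
  imports Defs
begin


definition smean :: "(nat \<times> nat \<Rightarrow> real) \<Rightarrow> nat \<Rightarrow> nat \<Rightarrow> nat \<Rightarrow> real" where
  "smean Y i s n = (\<Sum>r<n. Y (i, s + r)) / real n"

definition tau :: "nat \<Rightarrow> real \<Rightarrow> (nat \<times> nat \<Rightarrow> real) \<Rightarrow> nat \<Rightarrow> nat \<Rightarrow> nat" where
  "tau T th Y i s = (if \<exists>n\<in>{1..T}. smean Y i s n < th
      then LEAST n. n \<in> {1..T} \<and> smean Y i s n < th else Suc T)"

primrec st :: "nat \<Rightarrow> real \<Rightarrow> (nat \<times> nat \<Rightarrow> real) \<Rightarrow> nat \<Rightarrow> nat" where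
  "st T th Y 0 = 1"
| "st T th Y (Suc j) = st T th Y j + tau T th Y (Suc j) (st T th Y j)"

lemma tau_ge1: "1 \<le> tau T th Y i s"
proof (cases "\<exists>n\<in>{1..T}. smean Y i s n < th")
  case True
  then obtain n where "n \<in> {1..T} \<and> smean Y i s n < th" by blast
  then have "(LEAST n. n \<in> {1..T} \<and> smean Y i s n < th) \<in> {1..T}"
    by (metis (mono_tags, lifting) LeastI)
  then show ?thesis using True by (simp add: tau_def)
qed (simp add: tau_def)

lemma tau_le: "tau T th Y i s \<le> Suc T"
proof (cases "\<exists>n\<in>{1..T}. smean Y i s n < th")
  case True
  then obtain n where "n \<in> {1..T} \<and> smean Y i s n < th" by blast
  then have "(LEAST n. n \<in> {1..T} \<and> smean Y i s n < th) \<in> {1..T}"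
    by (metis (mono_tags, lifting) LeastI)
  then show ?thesis using True by (simp add: tau_def)
qed (simp add: tau_def)

lemma tau_lt: assumes "1 \<le> n" "n < tau T th Y i s" shows "th \<le> smean Y i s n"
proof (cases "\<exists>n\<in>{1..T}. smean Y i s n < th")
  case True
  have "n \<le> T" using assms tau_le[of T th Y i s] by linarith
  show ?thesis
  proof (rule ccontr)
    assume "\<not> th \<le> smean Y i s n"
    then have "n \<in> {1..T} \<and> smean Y i s n < th" using assms \<open>n \<le> T\<close> by auto
    then have "(LEAST n. n \<in> {1..T} \<and> smean Y i s n < th) \<le> n" by (rule Least_le)
    then show False using assms True by (simp add: tau_def)
  qed
next
  case False
  have "n \<le> T" using assms tau_le[of T th Y i s] by linarith
  then show ?thesis using False assms by force
qed

lemma tau_at: assumes "tau T th Y i s \<le> T" shows "smean Y i s (tau T th Y i s) < th"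
proof (cases "\<exists>n\<in>{1..T}. smean Y i s n < th")
  case True
  then obtain n where "n \<in> {1..T} \<and> smean Y i s n < th" by blast
  then have "(LEAST n. n \<in> {1..T} \<and> smean Y i s n < th) \<in> {1..T} \<and> smean Y i s (LEAST n. n \<in> {1..T} \<and> smean Y i s n < th) < th"
    by (rule LeastI)
  then show ?thesis using True by (simp add: tau_def)
next
  case False then show ?thesis using assms by (simp add: tau_def)
qed

lemma st_Suc_gt: "st T th Y j < st T th Y (Suc j)"
  using tau_ge1[of T th Y "Suc j" "st T th Y j"] by simp

lemma st_smono: "strict_mono (st T th Y)"
  using st_Suc_gt by (simp add: strict_mono_Suc_iff)

lemma st_ge1: "1 \<le> st T th Y j"
  by (induction j) auto

lemma st_le: "st T th Y j \<le> 1 + j * Suc T"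
proof (induction j)
  case (Suc j) then show ?case using tau_le[of T th Y "Suc j" "st T th Y j"] by simp
qed simp

lemma st_interval_ex:
  assumes "1 \<le> u" "u < st T th Y K" shows "\<exists>j<K. st T th Y j \<le> u \<and> u < st T th Y (Suc j)"
  using assms
proof (induction K)
  case 0 then show ?case by simp
next
  case (Suc K)
  show ?case
  proof (cases "u < st T th Y K")
    case True then show ?thesis using Suc by (metis less_Suc_eq)
  next
    case False then show ?thesis using Suc by (metis lessI not_le)
  qed
qed

lemma st_interval_uniq:
  assumes "st T th Y j \<le> u" "u < st T th Y (Suc j)" "st T th Y j' \<le> u" "u < st T th Y (Suc j')"
  shows "j = j'"
proof (rule ccontr)
  assume "j \<noteq> j'"
  then consider "j < j'" | "j' < j" by linarith
  then show False
  proof cases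
    case 1 then have "Suc j \<le> j'" by simp
    then have "st T th Y (Suc j) \<le> st T th Y j'" using st_smono strict_mono_less_eq by blast
    then show False using assms by linarith
  next
    case 2 then have "Suc j' \<le> j" by simp
    then have "st T th Y (Suc j') \<le> st T th Y j" using st_smono strict_mono_less_eq by blast
    then show False using assms by linarith
  qed
qed

lemma emp_mean_seq:
  assumes len: "length hs = t" and hs: "\<forall>s<t. \<forall>j. st T th Y j \<le> Suc s \<longrightarrow> Suc s < st T th Y (Suc j) \<longrightarrow> hs ! s = Suc j"
    and tK: "t < st T th Y K" and j: "st T th Y j \<le> t" "t < st T th Y (Suc j)"
  shows "emp_mean Y hs (Suc j) = smean Y (Suc j) (st T th Y j) (Suc t - st T th Y j)"
proof -
  let ?a = "st T th Y j - 1"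
  have a1: "1 \<le> st T th Y j" by (rule st_ge1)
  have S: "{s. s < length hs \<and> hs ! s = Suc j} = {?a..<t}"
  proof (intro set_eqI iffI)
    fix s assume s: "s \<in> {s. s < length hs \<and> hs ! s = Suc j}"
    then have "s < t" using len by simp
    then obtain j' where j': "j' < K" "st T th Y j' \<le> Suc s" "Suc s < st T th Y (Suc j')"
      using st_interval_ex[of "Suc s" T th Y K] tK by auto
    then have "hs ! s = Suc j'" using hs \<open>s < t\<close> by blast
    then have "j' = j" using s by simp
    then show "s \<in> {?a..<t}" using j' \<open>s < t\<close> by auto
  next
    fix s assume s: "s \<in> {?a..<t}"
    then have "st T th Y j \<le> Suc s" "Suc s < st T th Y (Suc j)" using j a1 by auto
    then show "s \<in> {s. s < length hs \<and> hs ! s = Suc j}" using hs s len by auto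
  qed
  have "(\<Sum>s<length hs. if hs ! s = Suc j then Y (Suc j, Suc s) else 0)
      = (\<Sum>s\<in>{s. s < length hs \<and> hs ! s = Suc j}. Y (Suc j, Suc s))"
    by (subst sum.inter_filter[symmetric]) (auto simp: lessThan_def)
  also have "\<dots> = (\<Sum>s\<in>{?a..<t}. Y (Suc j, Suc s))" using S by simp
  also have "\<dots> = (\<Sum>r\<in>{0..<t - ?a}. Y (Suc j, Suc (?a + r)))"
    by (subst sum.atLeastLessThan_shift_0) (simp add: comp_def)
  also have "\<dots> = (\<Sum>r<Suc t - st T th Y j. Y (Suc j, st T th Y j + r))"
    using a1 j by (intro sum.cong) auto
  finally have num: "(\<Sum>s<length hs. if hs ! s = Suc j then Y (Suc j, Suc s) else 0)
      = (\<Sum>r<Suc t - st T th Y j. Y (Suc j, st T th Y j + r))" .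
  have "card {s. s < length hs \<and> hs ! s = Suc j} = Suc t - st T th Y j"
    using S a1 j by simp
  then show ?thesis unfolding emp_mean_def smean_def num by simp
qed

lemma sg_run_seq:
  assumes "1 \<le> t" "t \<le> T" "t < st T (1 - \<upsilon>) Y k"
  shows "length (fst (sg_run \<upsilon> k Y t)) = t
    \<and> (\<forall>s<t. \<forall>j. st T (1 - \<upsilon>) Y j \<le> Suc s \<longrightarrow> Suc s < st T (1 - \<upsilon>) Y (Suc j) \<longrightarrow> fst (sg_run \<upsilon> k Y t) ! s = Suc j)
    \<and> (\<forall>j. st T (1 - \<upsilon>) Y j \<le> t \<longrightarrow> t < st T (1 - \<upsilon>) Y (Suc j) \<longrightarrow> snd (sg_run \<upsilon> k Y t) = Suc j)"
  using assms
proof (induction t)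
  case 0 then show ?case by simp
next
  case (Suc t)
  let ?st = "st T (1 - \<upsilon>) Y"
  show ?case
  proof (cases "t = 0")
    case True
    have u: "\<And>j. ?st j \<le> 1 \<Longrightarrow> 1 < ?st (Suc j) \<Longrightarrow> j = 0"
      using st_interval_uniq[of T "1 - \<upsilon>" Y _ 1 0] st_Suc_gt[of T "1 - \<upsilon>" Y 0] by simp
    have r: "sg_run \<upsilon> k Y (Suc 0) = ([1], 1)" by simp
    show ?thesis unfolding True r fst_conv snd_conv
    proof (intro conjI allI impI)
      fix s j assume "s < Suc 0" "?st j \<le> Suc s" "Suc s < ?st (Suc j)"
      then show "[1] ! s = Suc j" using u[of j] by simp
    next
      fix j assume "?st j \<le> Suc 0" "Suc 0 < ?st (Suc j)"
      then show "1 = Suc j" using u[of j] by simp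
    qed simp
  next
    case False
    obtain hs i where run: "sg_run \<upsilon> k Y t = (hs, i)" by (cases "sg_run \<upsilon> k Y t")
    have tk: "t < ?st k" using Suc.prems(3) by linarith
    have t1: "1 \<le> t" using False by simp
    have pre: "1 \<le> t" "t \<le> T" "t < ?st k" using t1 Suc.prems(2) tk by auto
    have IH: "length hs = t"
      "\<forall>s<t. \<forall>j. ?st j \<le> Suc s \<longrightarrow> Suc s < ?st (Suc j) \<longrightarrow> hs ! s = Suc j"
      "\<forall>j. ?st j \<le> t \<longrightarrow> t < ?st (Suc j) \<longrightarrow> i = Suc j"
      using Suc.IH[OF pre] unfolding run fst_conv snd_conv by blast+
    from st_interval_ex[OF t1 tk] obtain j where j: "j < k" "?st j \<le> t" "t < ?st (Suc j)"
      by blast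
    have i: "i = Suc j" using IH(3) j(2,3) by blast
    have em: "emp_mean Y hs i = smean Y (Suc j) (?st j) (Suc t - ?st j)"
      using emp_mean_seq[OF IH(1) IH(2) tk j(2,3)] i by simp
    have a1: "1 \<le> ?st j" by (rule st_ge1)
    have stS: "?st (Suc j) = ?st j + tau T (1 - \<upsilon>) Y (Suc j) (?st j)" by simp
    show ?thesis
    proof (cases "Suc t < ?st (Suc j)")
      case True
      have "Suc t - ?st j < tau T (1 - \<upsilon>) Y (Suc j) (?st j)" using True stS j by linarith
      then have "1 - \<upsilon> \<le> emp_mean Y hs i" unfolding em
        by (intro tau_lt) (use j in auto)
      then have run': "sg_run \<upsilon> k Y (Suc t) = (hs @ [i], i)" using run False by simp
      have jt: "?st j \<le> Suc t" using j(2) by simp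
      have uj: "j' = j" if "?st j' \<le> Suc t" "Suc t < ?st (Suc j')" for j'
        using st_interval_uniq[OF jt True that] by simp
      show ?thesis unfolding run' fst_conv snd_conv
      proof (intro conjI allI impI)
        show "length (hs @ [i]) = Suc t" using IH(1) by simp
      next
        fix s j' assume s: "s < Suc t" and a: "?st j' \<le> Suc s" "Suc s < ?st (Suc j')"
        show "(hs @ [i]) ! s = Suc j'"
        proof (cases "s < t")
          case True then show ?thesis using IH(1,2) a by (simp add: nth_append)
        next
          case False then have "s = t" using s by simp
          then show ?thesis using uj[of j'] a i IH(1) by (simp add: nth_append)
        qed
      next
        fix j' assume "?st j' \<le> Suc t" "Suc t < ?st (Suc j')"
        then show "i = Suc j'" using uj i by simp
      qed
    next
      case False2: False
      then have eq: "Suc t = ?st (Suc j)" using j by linarith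
      have tau_eq: "tau T (1 - \<upsilon>) Y (Suc j) (?st j) = Suc t - ?st j" using eq stS by linarith
      have "tau T (1 - \<upsilon>) Y (Suc j) (?st j) \<le> T" using tau_eq Suc.prems(2) a1 by linarith
      then have "smean Y (Suc j) (?st j) (tau T (1 - \<upsilon>) Y (Suc j) (?st j)) < 1 - \<upsilon>" by (rule tau_at)
      then have "smean Y (Suc j) (?st j) (Suc t - ?st j) < 1 - \<upsilon>" unfolding tau_eq .
      then have nlt: "\<not> 1 - \<upsilon> \<le> emp_mean Y hs i" using em by simp
      have "Suc j < k"
      proof (rule ccontr)
        assume "\<not> Suc j < k"
        then have "k \<le> Suc j" by simp
        then have "?st k \<le> ?st (Suc j)" using st_smono strict_mono_less_eq by blast
        then show False using Suc.prems(3) eq by linarith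
      qed
      then have "i < k" using i by simp
      then have run': "sg_run \<upsilon> k Y (Suc t) = (hs @ [Suc i], Suc i)" using run False nlt by simp
      have jt: "?st (Suc j) \<le> Suc t" using eq by simp
      have jt2: "Suc t < ?st (Suc (Suc j))" using eq st_Suc_gt[of T "1 - \<upsilon>" Y "Suc j"] by simp
      have uj: "j' = Suc j" if "?st j' \<le> Suc t" "Suc t < ?st (Suc j')" for j'
        using st_interval_uniq[OF jt jt2 that] by simp
      show ?thesis unfolding run' fst_conv snd_conv
      proof (intro conjI allI impI)
        show "length (hs @ [Suc i]) = Suc t" using IH(1) by simp
      next
        fix s j' assume s: "s < Suc t" and a: "?st j' \<le> Suc s" "Suc s < ?st (Suc j')"
        show "(hs @ [Suc i]) ! s = Suc j'"
        proof (cases "s < t")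
          case True then show ?thesis using IH(1,2) a by (simp add: nth_append)
        next
          case False then have "s = t" using s by simp
          then show ?thesis using uj[of j'] a i IH(1) by (simp add: nth_append)
        qed
      next
        fix j' assume "?st j' \<le> Suc t" "Suc t < ?st (Suc j')"
        then show "Suc i = Suc j'" using uj i by simp
      qed
    qed
  qed
qed

lemma sg_arm_seq:
  assumes "1 \<le> t" "t \<le> T" "t < st T (1 - \<upsilon>) Y k"
    "st T (1 - \<upsilon>) Y j \<le> t" "t < st T (1 - \<upsilon>) Y (Suc j)"
  shows "sg_arm \<upsilon> k Y t = Suc j"
proof -
  have "t - 1 < t" "Suc (t - 1) = t" using assms(1) by auto
  then show ?thesis using sg_run_seq[OF assms(1-3)] assms(4,5) unfolding sg_arm_def by simp
qed

lemma sg_run_range: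
  assumes "1 \<le> k"
  shows "length (fst (sg_run \<upsilon> k Y t)) = t \<and> set (fst (sg_run \<upsilon> k Y t)) \<subseteq> {1..k} \<and> snd (sg_run \<upsilon> k Y t) \<in> {1..k}"
proof (induction t)
  case 0 then show ?case using assms by simp
next
  case (Suc t)
  obtain hs i where run: "sg_run \<upsilon> k Y t = (hs, i)" by (cases "sg_run \<upsilon> k Y t")
  let ?e = "\<lambda>j. emp_mean Y hs j"
  have "\<exists>j. j \<in> {1..k} \<and> (\<forall>j'\<in>{1..k}. ?e j' \<le> ?e j)"
  proof -
    have fin: "finite (?e ` {1..k})" "?e ` {1..k} \<noteq> {}" using assms by auto
    obtain j where j: "j \<in> {1..k}" "?e j = Max (?e ` {1..k})" using Max_in[OF fin] by auto
    have "\<forall>j'\<in>{1..k}. ?e j' \<le> ?e j" unfolding j(2) using fin(1) by simp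
    then show ?thesis using j(1) by blast
  qed
  then have L: "(LEAST j. j \<in> {1..k} \<and> (\<forall>j'\<in>{1..k}. ?e j' \<le> ?e j)) \<in> {1..k}"
    by (rule LeastI2_ex) auto
  show ?case
  proof (cases "t = 0")
    case True then show ?thesis using assms by simp
  next
    case False
    have IH: "length hs = t" "set hs \<subseteq> {1..k}" "i \<in> {1..k}" using Suc.IH run by auto
    show ?thesis
      using IH L False run by (simp add: Let_def)
  qed
qed

lemma sg_arm_range:
  assumes "1 \<le> k" "1 \<le> t" shows "sg_arm \<upsilon> k Y t \<in> {1..k}"
proof -
  have "t - 1 < length (fst (sg_run \<upsilon> k Y t))" using sg_run_range[OF assms(1)] assms(2) by simp
  then show ?thesis using sg_run_range[OF assms(1), of \<upsilon> Y t] unfolding sg_arm_def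
    using nth_mem by blast
qed




lemma coord_PiM:
  assumes "\<And>x. x \<in> A \<Longrightarrow> sets (M x) = sets borel"
  shows "(\<lambda>Y. Y x) \<in> borel_measurable (PiM A M)"
proof (cases "x \<in> A")
  case True
  have "(\<lambda>Y. Y x) \<in> measurable (PiM A M) (M x)" using True by (rule measurable_component_singleton)
  then show ?thesis using measurable_cong_sets[of "PiM A M" "PiM A M" "M x" borel] assms[OF True] by simp
next
  case False
  have "(\<lambda>Y. undefined) \<in> borel_measurable (PiM A M)" by simp
  moreover have "\<And>Y. Y \<in> space (PiM A M) \<Longrightarrow> Y x = undefined"
    using False by (auto simp: space_PiM PiE_def extensional_def)
  ultimately show ?thesis by (subst measurable_cong[where g="\<lambda>Y. undefined"]) auto
qed

context
  fixes N :: "(nat \<times> nat \<Rightarrow> real) measure"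
  assumes coord[measurable]: "\<And>x. (\<lambda>Y. Y x) \<in> borel_measurable N"
begin

lemma meas_smean[measurable]: "(\<lambda>Y. smean Y i s n) \<in> borel_measurable N"
  unfolding smean_def by measurable

lemma meas_tau[measurable]: "(\<lambda>Y. tau T th Y i s) \<in> measurable N (count_space UNIV)"
  unfolding tau_def by measurable

lemma meas_st[measurable]: "(\<lambda>Y. st T th Y j) \<in> measurable N (count_space UNIV)"
proof (induction j)
  case 0 then show ?case by simp
next
  case (Suc j)
  have "(\<lambda>Y. (\<lambda>s. s + tau T th Y (Suc j) s) (st T th Y j)) \<in> measurable N (count_space UNIV)"
  proof (rule measurable_compose_countable[where f="\<lambda>s Y. s + tau T th Y (Suc j) s"])
    fix s :: nat
    show "(\<lambda>Y. s + tau T th Y (Suc j) s) \<in> measurable N (count_space UNIV)"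
      using measurable_compose[OF meas_tau, of "\<lambda>n. s + n"] by simp
  qed (rule Suc)
  then show ?case by simp
qed

lemma meas_emp_mean[measurable]: "(\<lambda>Y. emp_mean Y hs i) \<in> borel_measurable N"
  unfolding emp_mean_def by measurable

lemma meas_sg_run[measurable]: "(\<lambda>Y. sg_run \<upsilon> k Y t) \<in> measurable N (count_space UNIV)"
proof (induction t)
  case 0 then show ?case by simp
next
  case (Suc t)
  let ?F = "\<lambda>p Y. case p of (hs, i) \<Rightarrow>
        if t = 0 then ([1], 1)
        else if emp_mean Y hs i \<ge> 1 - \<upsilon> then (hs @ [i], i)
        else if i < k then (hs @ [Suc i], Suc i)
        else (hs @ [LEAST j. j \<in> {1..k} \<and>
                      (\<forall>j'\<in>{1..k}. emp_mean Y hs j' \<le> emp_mean Y hs j)], i)"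
  have "(\<lambda>Y. ?F (sg_run \<upsilon> k Y t) Y) \<in> measurable N (count_space UNIV)"
  proof (rule measurable_compose_countable[where f="?F"])
    fix p :: "nat list \<times> nat"
    obtain hs i where p: "p = (hs, i)" by (cases p)
    have P[measurable]: "\<And>a b. Measurable.pred N (\<lambda>Y. emp_mean Y hs a \<le> emp_mean Y hs b)"
      unfolding pred_def by (intro borel_measurable_le meas_emp_mean)
    have L: "(\<lambda>Y. LEAST j. j \<in> {1..k} \<and> (\<forall>j'\<in>{1..k}. emp_mean Y hs j' \<le> emp_mean Y hs j))
        \<in> measurable N (count_space UNIV)" by measurable
    have L2[measurable]: "(\<lambda>Y. (hs @ [LEAST j. j \<in> {1..k} \<and> (\<forall>j'\<in>{1..k}. emp_mean Y hs j' \<le> emp_mean Y hs j)], i))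
        \<in> measurable N (count_space UNIV)"
      using measurable_compose[OF L, of "\<lambda>n. (hs @ [n], i)"] by simp
    have E: "{Y \<in> space N. 1 - \<upsilon> \<le> emp_mean Y hs i} \<in> sets N" by measurable
    show "(\<lambda>Y. ?F p Y) \<in> measurable N (count_space UNIV)"
      unfolding p prod.case by measurable
  qed (rule Suc)
  then show ?case by (simp add: case_prod_beta)
qed

lemma meas_sg_arm[measurable]: "(\<lambda>Y. sg_arm \<upsilon> k Y t) \<in> measurable N (count_space UNIV)"
  unfolding sg_arm_def
  using measurable_compose[OF meas_sg_run, of "\<lambda>p. fst p ! (t - 1)"] by simp

end



lemma indep_restrict_events:
  fixes M :: "'i \<Rightarrow> real measure"
  assumes prob: "\<And>x. x \<in> I \<Longrightarrow> prob_space (M x)"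
    and "I \<noteq> {}" "A \<inter> B = {}" "A \<subseteq> I" "B \<subseteq> I"
    and Xa: "Xa \<in> sets (PiM A M)" and Xb: "Xb \<in> sets (PiM B M)"
  shows "measure (PiM I M) {Y \<in> space (PiM I M). restrict Y A \<in> Xa \<and> restrict Y B \<in> Xb}
       = measure (PiM I M) {Y \<in> space (PiM I M). restrict Y A \<in> Xa}
         * measure (PiM I M) {Y \<in> space (PiM I M). restrict Y B \<in> Xb}"
proof -
  interpret prob_space "PiM I M" by (rule prob_space_PiM) (rule prob)
  have rv: "\<And>x. x \<in> I \<Longrightarrow> random_variable (M x) (\<lambda>Y. Y x)"
    by (rule measurable_component_singleton)
  have d1: "distr (PiM I M) (PiM I M) (\<lambda>Y. \<lambda>x\<in>I. Y x) = PiM I M"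
  proof -
    have "distr (PiM I M) (PiM I M) (\<lambda>Y. \<lambda>x\<in>I. Y x) = distr (PiM I M) (PiM I M) (\<lambda>Y. Y)"
      by (rule distr_cong) (auto simp: space_PiM PiE_def extensional_def restrict_def fun_eq_iff)
    then show ?thesis by simp
  qed
  have d2: "(\<Pi>\<^sub>M x\<in>I. distr (PiM I M) (M x) (\<lambda>Y. Y x)) = PiM I M"
    by (rule PiM_cong) (auto simp: distr_PiM_component prob)
  have iv: "indep_vars M (\<lambda>x Y. Y x) I"
    using indep_vars_iff_distr_eq_PiM'[where I=I and M'=M and X="\<lambda>x Y. Y x"] rv \<open>I \<noteq> {}\<close> d1 d2 by simp
  have ivr: "indep_var (PiM A M) (\<lambda>Y. restrict Y A) (PiM B M) (\<lambda>Y. restrict Y B)"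
    using indep_var_restrict[OF iv assms(3-5)] by simp
  have "{Y \<in> space (PiM I M). restrict Y A \<in> Xa \<and> restrict Y B \<in> Xb}
      = (\<lambda>Y. (restrict Y A, restrict Y B)) -` (Xa \<times> Xb) \<inter> space (PiM I M)" by auto
  moreover have "{Y \<in> space (PiM I M). restrict Y A \<in> Xa} = (\<lambda>Y. restrict Y A) -` Xa \<inter> space (PiM I M)" by auto
  moreover have "{Y \<in> space (PiM I M). restrict Y B \<in> Xb} = (\<lambda>Y. restrict Y B) -` Xb \<inter> space (PiM I M)" by auto
  ultimately show ?thesis using indep_varD[OF ivr Xa Xb] by simp
qed

definition gd :: "nat \<Rightarrow> real \<Rightarrow> (nat \<times> nat \<Rightarrow> real) \<Rightarrow> nat \<Rightarrow> nat \<Rightarrow> bool" where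
  "gd T th Y i s \<longleftrightarrow> (\<forall>n. 1 \<le> n \<longrightarrow> s + n \<le> T \<longrightarrow> th \<le> smean Y i s n)"

locale bandit =
  fixes P :: "real \<Rightarrow> real measure" and k T :: nat and m :: "nat \<Rightarrow> real" and \<delta> :: real
  assumes Pprob: "\<And>\<mu>. \<mu> \<in> {0..1} \<Longrightarrow> prob_space (P \<mu>)"
    and Psets: "\<And>\<mu>. \<mu> \<in> {0..1} \<Longrightarrow> sets (P \<mu>) = sets borel"
    and Psubg: "\<And>\<mu> s. \<mu> \<in> {0..1} \<Longrightarrow> integrable (P \<mu>) (\<lambda>z. exp (s * (z - \<mu>)))
                  \<and> (\<integral>z. exp (s * (z - \<mu>)) \<partial>P \<mu>) \<le> exp (s\<^sup>2 / 2)"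
    and m01: "\<And>i. i \<in> {1..k} \<Longrightarrow> m i \<in> {0..1}"
    and k1: "1 \<le> k" and T1: "1 \<le> T" and dpos: "0 < \<delta>"
begin

abbreviation "II \<equiv> {1..k} \<times> {1..T}"
abbreviation "MM \<equiv> \<lambda>it. P (m (fst it))"
abbreviation "\<Omega> \<equiv> PiM II MM"

lemma MM_prob: "it \<in> II \<Longrightarrow> prob_space (MM it)"
  using m01 Pprob by auto

lemma MM_sets: "it \<in> II \<Longrightarrow> sets (MM it) = sets borel"
  using m01 Psets by auto

lemma II_ne: "II \<noteq> {}" using k1 T1 by auto

sublocale prob_space \<Omega> by (rule prob_space_PiM) (rule MM_prob)

lemma coordA: "A \<subseteq> II \<Longrightarrow> (\<lambda>Y. Y x) \<in> borel_measurable (PiM A MM)"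
  by (rule coord_PiM) (use MM_sets in blast)

lemma coordO[measurable]: "(\<lambda>Y. Y x) \<in> borel_measurable \<Omega>"
  by (rule coordA) simp

lemma reindex:
  assumes "i \<in> {1..k}" "1 \<le> s" "s + L \<le> Suc T"
  shows "distr \<Omega> (PiM {..<L} (\<lambda>_. P (m i))) (\<lambda>Y. \<lambda>r\<in>{..<L}. Y (i, s + r)) = PiM {..<L} (\<lambda>_. P (m i))"
proof -
  have "distr \<Omega> (PiM {..<L} (\<lambda>r. MM (i, s + r))) (\<lambda>Y. \<lambda>r\<in>{..<L}. Y (i, s + r)) = PiM {..<L} (\<lambda>r. MM (i, s + r))"
    by (rule distr_PiM_reindex) (use MM_prob assms in \<open>auto simp: inj_on_def\<close>)
  then show ?thesis by simp
qed

lemma reindex_meas: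
  assumes "i \<in> {1..k}" "1 \<le> s" "s + L \<le> Suc T"
  shows "(\<lambda>Y. \<lambda>r\<in>{..<L}. Y (i, s + r)) \<in> measurable \<Omega> (PiM {..<L} (\<lambda>_. P (m i)))"
proof -
  have "(\<lambda>Y. \<lambda>r\<in>{..<L}. Y (i, s + r)) \<in> measurable \<Omega> (PiM {..<L} (\<lambda>r. MM (i, s + r)))"
    by (intro measurable_restrict measurable_component_singleton) (use assms in auto)
  then show ?thesis by simp
qed

lemma event_transfer:
  assumes "i \<in> {1..k}" "1 \<le> s" "s + L \<le> Suc T" "R \<in> sets (PiM {..<L} (\<lambda>_. P (m i)))"
  shows "measure \<Omega> {Y \<in> space \<Omega>. (\<lambda>r\<in>{..<L}. Y (i, s + r)) \<in> R} = measure (PiM {..<L} (\<lambda>_. P (m i))) R"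
proof -
  have "measure (PiM {..<L} (\<lambda>_. P (m i))) R = measure (distr \<Omega> (PiM {..<L} (\<lambda>_. P (m i))) (\<lambda>Y. \<lambda>r\<in>{..<L}. Y (i, s + r))) R"
    using reindex[OF assms(1-3)] by simp
  also have "\<dots> = measure \<Omega> ((\<lambda>Y. \<lambda>r\<in>{..<L}. Y (i, s + r)) -` R \<inter> space \<Omega>)"
    by (rule measure_distr[OF reindex_meas[OF assms(1-3)] assms(4)])
  finally show ?thesis by (simp add: Collect_conj_eq Int_commute vimage_def)
qed

lemma chernoff_prod:
  assumes mu: "\<mu> \<in> {0..1}" and lt: "\<mu> < th" and n: "1 \<le> n"
  shows "measure (PiM {..<n} (\<lambda>_. P \<mu>)) {x \<in> space (PiM {..<n} (\<lambda>_. P \<mu>)). th \<le> (\<Sum>r<n. x r) / real n}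
    \<le> exp (- (real n * (th - \<mu>)\<^sup>2 / 2))"
proof -
  interpret Q: prob_space "P \<mu>" using Pprob mu by blast
  interpret PS: product_prob_space "\<lambda>_. P \<mu>" "{..<n}" by unfold_locales
  let ?PM = "PiM {..<n} (\<lambda>_. P \<mu>)"
  define D where "D = th - \<mu>"
  have D: "0 < D" using lt by (simp add: D_def)
  let ?S = "{x \<in> space ?PM. th \<le> (\<Sum>r<n. x r) / real n}"
  let ?g = "\<lambda>x. (\<Prod>r\<in>{..<n}. exp (D * (x r - \<mu>))) * exp (- (D * (real n * D)))"
  have cPM[measurable]: "\<And>r. (\<lambda>x. x r) \<in> borel_measurable ?PM"
    by (rule coord_PiM) (use Psets mu in blast)
  have meas: "?S \<in> sets ?PM" by measurable
  have intf: "\<And>r. integrable (P \<mu>) (\<lambda>z. exp (D * (z - \<mu>)))" using Psubg mu by blast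
  have int: "integrable ?PM ?g"
    by (intro integrable_mult_left PS.product_integrable_prod) (auto intro: intf)
  have pt: "indicator ?S x \<le> ?g x" if x: "x \<in> space ?PM" for x
  proof (cases "x \<in> ?S")
    case True
    then have "th \<le> (\<Sum>r<n. x r) / real n" by simp
    then have "real n * th \<le> (\<Sum>r<n. x r)" using n by (simp add: field_simps)
    then have "real n * D \<le> (\<Sum>r<n. (x r - \<mu>))" by (simp add: sum_subtractf D_def algebra_simps)
    then have "D * (real n * D) \<le> D * (\<Sum>r<n. (x r - \<mu>))" using D by simp
    then have "exp (D * (real n * D)) \<le> exp (\<Sum>r<n. D * (x r - \<mu>))" by (simp add: sum_distrib_left)
    then have "1 \<le> exp (\<Sum>r<n. D * (x r - \<mu>)) * exp (- (D * (real n * D)))"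
      by (simp add: exp_minus field_simps)
    then show ?thesis using True by (simp add: exp_sum)
  next
    case False then show ?thesis by (simp add: prod_nonneg)
  qed
  have "measure ?PM ?S = (\<integral>x. indicator ?S x \<partial>?PM)" using meas by simp
  also have "\<dots> \<le> (\<integral>x. ?g x \<partial>?PM)"
    by (rule integral_mono'[OF int]) (use pt in \<open>auto simp: prod_nonneg\<close>)
  also have "\<dots> = (\<Prod>r\<in>{..<n}. (\<integral>z. exp (D * (z - \<mu>)) \<partial>P \<mu>)) * exp (- (D * (real n * D)))"
    by (subst integral_mult_left_zero) (subst PS.product_integral_prod, auto intro: intf)
  also have "\<dots> \<le> (\<Prod>r\<in>{..<n}. exp (D\<^sup>2 / 2)) * exp (- (D * (real n * D)))"
    by (intro mult_right_mono prod_mono) (use Psubg mu in auto)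
  also have "\<dots> = exp (- (real n * D\<^sup>2 / 2))"
    by (simp add: exp_of_nat_mult[symmetric] exp_add[symmetric] power2_eq_square field_simps)
  finally show ?thesis by (simp add: D_def)
qed

lemma chernoff_Omega:
  assumes i: "i \<in> {1..k}" and lt: "m i < th" and n: "1 \<le> n" and s: "1 \<le> s" "s + n \<le> Suc T"
  shows "measure \<Omega> {Y \<in> space \<Omega>. th \<le> smean Y i s n} \<le> exp (- (real n * (th - m i)\<^sup>2 / 2))"
proof -
  let ?PM = "PiM {..<n} (\<lambda>_. P (m i))"
  let ?R = "{x \<in> space ?PM. th \<le> (\<Sum>r<n. x r) / real n}"
  have cPM[measurable]: "\<And>r. (\<lambda>x. x r) \<in> borel_measurable ?PM"
    by (rule coord_PiM) (use Psets m01 i in blast)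
  have R: "?R \<in> sets ?PM" by measurable
  have "{Y \<in> space \<Omega>. th \<le> smean Y i s n} = {Y \<in> space \<Omega>. (\<lambda>r\<in>{..<n}. Y (i, s + r)) \<in> ?R}"
    using measurable_space[OF reindex_meas[OF i s]] by (auto simp: smean_def)
  also have "measure \<Omega> \<dots> = measure ?PM ?R" by (rule event_transfer[OF i s R])
  also have "\<dots> \<le> exp (- (real n * (th - m i)\<^sup>2 / 2))" by (rule chernoff_prod[OF m01[OF i] lt n])
  finally show ?thesis .
qed

end




lemma smean_local: "(\<And>u. Y (i, u) = Y' (i, u)) \<Longrightarrow> smean Y i s n = smean Y' i s n"
  by (simp add: smean_def)

lemma tau_local: "(\<And>u. Y (i, u) = Y' (i, u)) \<Longrightarrow> tau T th Y i s = tau T th Y' i s"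
  unfolding tau_def using smean_local[of Y i Y' s] by simp

lemma gd_local: "(\<And>u. Y (i, u) = Y' (i, u)) \<Longrightarrow> gd T th Y i s = gd T th Y' i s"
  unfolding gd_def using smean_local[of Y i Y' s] by simp

lemma st_local: "(\<And>i u. 1 \<le> i \<Longrightarrow> i \<le> j \<Longrightarrow> Y (i, u) = Y' (i, u)) \<Longrightarrow> st T th Y j = st T th Y' j"
proof (induction j)
  case 0 then show ?case by simp
next
  case (Suc j)
  have "st T th Y j = st T th Y' j" using Suc by simp
  moreover have "tau T th Y (Suc j) s = tau T th Y' (Suc j) s" for s
    by (rule tau_local) (use Suc.prems in simp)
  ultimately show ?case by simp
qed

context bandit begin

lemma q_le_gd:
  assumes i: "i \<in> {1..k}" and s: "1 \<le> s"
  shows "q_prob P th (m i) \<le> measure \<Omega> {Y \<in> space \<Omega>. gd T th Y i s}"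
proof -
  let ?Q = "P (m i)"
  interpret Q: prob_space ?Q using Pprob m01 i by blast
  interpret PU: product_prob_space "\<lambda>_. ?Q" "UNIV :: nat set" by unfold_locales
  let ?U = "PiM (UNIV :: nat set) (\<lambda>_. ?Q)"
  let ?Qs = "{x \<in> space ?U. \<forall>n\<ge>1. (\<Sum>i<n. x i) / real n > th}"
  have q1: "q_prob P th (m i) \<le> 1" unfolding q_prob_def by (rule PU.prob_le_1)
  show ?thesis
  proof (cases "T \<le> s")
    case True
    then have "{Y \<in> space \<Omega>. gd T th Y i s} = space \<Omega>" by (auto simp: gd_def)
    then have "measure \<Omega> {Y \<in> space \<Omega>. gd T th Y i s} = 1" using prob_space by (simp only:)
    then show ?thesis using q1 by linarith
  next
    case False
    define L where "L = T - s"
    have sL: "s + L \<le> Suc T" using False by (simp add: L_def)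
    let ?PM = "PiM {..<L} (\<lambda>_. ?Q)"
    let ?R = "{x \<in> space ?PM. \<forall>n. 1 \<le> n \<longrightarrow> n \<le> L \<longrightarrow> th \<le> (\<Sum>r<n. x r) / real n}"
    have cPM[measurable]: "\<And>r. (\<lambda>x. x r) \<in> borel_measurable ?PM"
      by (rule coord_PiM) (use Psets m01 i in blast)
    have R: "?R \<in> sets ?PM" by measurable
    have eqs: "{Y \<in> space \<Omega>. gd T th Y i s} = {Y \<in> space \<Omega>. (\<lambda>r\<in>{..<L}. Y (i, s + r)) \<in> ?R}"
    proof (intro Collect_cong conj_cong refl)
      fix Y assume Y: "Y \<in> space \<Omega>"
      have sp: "(\<lambda>r\<in>{..<L}. Y (i, s + r)) \<in> space ?PM"
        using measurable_space[OF reindex_meas[OF i s sL] Y] .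
      have "smean Y i s n = (\<Sum>r<n. (\<lambda>r\<in>{..<L}. Y (i, s + r)) r) / real n" if "n \<le> L" for n
        using that by (auto simp: smean_def intro!: sum.cong arg_cong[where f="\<lambda>x. x / real n"])
      then show "gd T th Y i s \<longleftrightarrow> (\<lambda>r\<in>{..<L}. Y (i, s + r)) \<in> ?R"
        using sp False by (auto simp: gd_def L_def)
    qed
    have m1: "measure \<Omega> {Y \<in> space \<Omega>. gd T th Y i s} = measure ?PM ?R"
      unfolding eqs by (rule event_transfer[OF i s sL R])
    have sub: "?Qs \<subseteq> prod_emb UNIV (\<lambda>_. ?Q) {..<L} ?R"
    proof
      fix x assume x: "x \<in> ?Qs"
      have "restrict x {..<L} \<in> space ?PM" using x by (auto simp: space_PiM)
      moreover have "th \<le> (\<Sum>r<n. restrict x {..<L} r) / real n" if "1 \<le> n" "n \<le> L" for n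
      proof -
        have "(\<Sum>r<n. restrict x {..<L} r) = (\<Sum>r<n. x r)" using that by (intro sum.cong) auto
        then show ?thesis using x that by auto
      qed
      ultimately show "x \<in> prod_emb UNIV (\<lambda>_. ?Q) {..<L} ?R"
        using x by (auto simp: prod_emb_def space_PiM)
    qed
    have "emeasure ?U (prod_emb UNIV (\<lambda>_. ?Q) {..<L} ?R) = emeasure ?PM ?R"
      by (rule PU.emeasure_PiM_emb') (auto intro: R)
    then have m2: "measure ?U (prod_emb UNIV (\<lambda>_. ?Q) {..<L} ?R) = measure ?PM ?R"
      by (simp add: measure_def)
    have "q_prob P th (m i) = measure ?U ?Qs" unfolding q_prob_def by simp
    also have "\<dots> \<le> measure ?U (prod_emb UNIV (\<lambda>_. ?Q) {..<L} ?R)"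
      by (rule PU.P.finite_measure_mono[OF sub]) (use R in auto)
    finally show ?thesis using m1 m2 by simp
  qed
qed

lemma restrict_agree:
  assumes Y: "Y \<in> space \<Omega>" and S: "S \<subseteq> {1..k}" and i: "i \<in> S"
  shows "restrict Y (S \<times> {1..T}) (i, u) = Y (i, u)"
proof (cases "u \<in> {1..T}")
  case True then show ?thesis using i by simp
next
  case False
  then have "(i, u) \<notin> II" by auto
  then have "Y (i, u) = undefined" using Y by (auto simp: space_PiM PiE_def extensional_def)
  then show ?thesis using False by simp
qed

lemma indep_split:
  assumes Sa: "Sa \<subseteq> {1..k}" and Sb: "Sb \<subseteq> {1..k}" and dis: "Sa \<inter> Sb = {}"
    and la: "\<And>Y Y'. (\<And>i u. i \<in> Sa \<Longrightarrow> Y (i, u) = Y' (i, u)) \<Longrightarrow> Pa Y = Pa Y'"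
    and lb: "\<And>Y Y'. (\<And>i u. i \<in> Sb \<Longrightarrow> Y (i, u) = Y' (i, u)) \<Longrightarrow> Pb Y = Pb Y'"
    and ma: "Measurable.pred (PiM (Sa \<times> {1..T}) MM) Pa"
    and mb: "Measurable.pred (PiM (Sb \<times> {1..T}) MM) Pb"
  shows "measure \<Omega> {Y \<in> space \<Omega>. Pa Y \<and> Pb Y}
    = measure \<Omega> {Y \<in> space \<Omega>. Pa Y} * measure \<Omega> {Y \<in> space \<Omega>. Pb Y}"
proof -
  let ?A = "Sa \<times> {1..T}" and ?B = "Sb \<times> {1..T}"
  let ?Xa = "{Z \<in> space (PiM ?A MM). Pa Z}" and ?Xb = "{Z \<in> space (PiM ?B MM). Pb Z}"
  have Xa: "?Xa \<in> sets (PiM ?A MM)" using ma by (simp add: pred_def)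
  have Xb: "?Xb \<in> sets (PiM ?B MM)" using mb by (simp add: pred_def)
  have AI: "?A \<subseteq> II" "?B \<subseteq> II" using Sa Sb by auto
  have AB: "?A \<inter> ?B = {}" using dis by auto
  have ra: "restrict Y ?A \<in> Xa \<longleftrightarrow> Pa Y" if "Y \<in> space \<Omega>" "Xa = ?Xa" for Y Xa
  proof -
    have "restrict Y ?A \<in> space (PiM ?A MM)" using that(1) AI by (auto simp: space_PiM)
    moreover have "Pa (restrict Y ?A) = Pa Y"
      by (rule la) (use restrict_agree[OF that(1) Sa] in simp)
    ultimately show ?thesis using that(2) by simp
  qed
  have rb: "restrict Y ?B \<in> Xb \<longleftrightarrow> Pb Y" if "Y \<in> space \<Omega>" "Xb = ?Xb" for Y Xb
  proof -
    have "restrict Y ?B \<in> space (PiM ?B MM)" using that(1) AI by (auto simp: space_PiM)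
    moreover have "Pb (restrict Y ?B) = Pb Y"
      by (rule lb) (use restrict_agree[OF that(1) Sb] in simp)
    ultimately show ?thesis using that(2) by simp
  qed
  have e1: "{Y \<in> space \<Omega>. restrict Y ?A \<in> ?Xa \<and> restrict Y ?B \<in> ?Xb} = {Y \<in> space \<Omega>. Pa Y \<and> Pb Y}"
    using ra rb by blast
  have e2: "{Y \<in> space \<Omega>. restrict Y ?A \<in> ?Xa} = {Y \<in> space \<Omega>. Pa Y}" using ra by blast
  have e3: "{Y \<in> space \<Omega>. restrict Y ?B \<in> ?Xb} = {Y \<in> space \<Omega>. Pb Y}" using rb by blast
  show ?thesis
    using indep_restrict_events[OF MM_prob II_ne AB AI Xa Xb] unfolding e1 e2 e3 .
qed

lemma measure_split_finite:
  assumes fin: "finite S" and f: "\<And>Y. Y \<in> space \<Omega> \<Longrightarrow> f Y \<in> S"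
    and meas: "\<And>s. s \<in> S \<Longrightarrow> {Y \<in> space \<Omega>. Q Y \<and> f Y = s} \<in> sets \<Omega>"
  shows "measure \<Omega> {Y \<in> space \<Omega>. Q Y} = (\<Sum>s\<in>S. measure \<Omega> {Y \<in> space \<Omega>. Q Y \<and> f Y = s})"
proof -
  have "{Y \<in> space \<Omega>. Q Y} = (\<Union>s\<in>S. {Y \<in> space \<Omega>. Q Y \<and> f Y = s})" using f by auto
  then show ?thesis
    by (simp only:) (rule finite_measure_finite_Union[OF fin], use meas in \<open>auto simp: disjoint_family_on_def\<close>)
qed

lemma pred_lift:
  assumes Sa: "Sa \<subseteq> {1..k}"
    and la: "\<And>Y Y'. (\<And>i u. i \<in> Sa \<Longrightarrow> Y (i, u) = Y' (i, u)) \<Longrightarrow> Pa Y = Pa Y'"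
    and ma: "Measurable.pred (PiM (Sa \<times> {1..T}) MM) Pa"
  shows "Measurable.pred \<Omega> Pa"
proof -
  have "(\<lambda>Y. restrict Y (Sa \<times> {1..T})) \<in> measurable \<Omega> (PiM (Sa \<times> {1..T}) MM)"
    by (rule measurable_restrict_subset) (use Sa in auto)
  from measurable_compose[OF this ma] have "Measurable.pred \<Omega> (\<lambda>Y. Pa (restrict Y (Sa \<times> {1..T})))" .
  moreover have "\<And>Y. Y \<in> space \<Omega> \<Longrightarrow> Pa (restrict Y (Sa \<times> {1..T})) = Pa Y"
    by (rule la) (use restrict_agree Sa in auto)
  ultimately show ?thesis using measurable_cong[of \<Omega> "\<lambda>Y. Pa (restrict Y (Sa \<times> {1..T}))" Pa] by simp
qed

lemma st_split:
  fixes th :: real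
  assumes j: "Suc j \<le> k"
    and la: "\<And>Y Y'. (\<And>i u. i \<in> {1..j} \<Longrightarrow> Y (i, u) = Y' (i, u)) \<Longrightarrow> Pa Y = Pa Y'"
    and ma: "Measurable.pred (PiM ({1..j} \<times> {1..T}) MM) Pa"
    and lb: "\<And>s Y Y'. (\<And>i u. i \<in> {Suc j} \<Longrightarrow> Y (i, u) = Y' (i, u)) \<Longrightarrow> Pb s Y = Pb s Y'"
    and mb: "\<And>s. Measurable.pred (PiM ({Suc j} \<times> {1..T}) MM) (Pb s)"
    and c: "\<And>s. 1 \<le> s \<Longrightarrow> measure \<Omega> {Y \<in> space \<Omega>. Pb s Y} \<le> c"
  shows "measure \<Omega> {Y \<in> space \<Omega>. Pa Y \<and> Pb (st T th Y j) Y} \<le> c * measure \<Omega> {Y \<in> space \<Omega>. Pa Y}"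
proof -
  let ?S = "{1..1 + j * Suc T}"
  have Sa: "{1..j} \<subseteq> {1..k}" using j by auto
  have Sb: "{Suc j} \<subseteq> {1..k}" using j by auto
  have stS: "st T th Y j \<in> ?S" for Y using st_ge1[of T th Y j] st_le[of T th Y j] by simp
  let ?Pa' = "\<lambda>s Y. Pa Y \<and> st T th Y j = s"
  have la': "?Pa' s Y = ?Pa' s Y'" if "\<And>i u. i \<in> {1..j} \<Longrightarrow> Y (i, u) = Y' (i, u)" for s Y Y'
  proof -
    have "st T th Y j = st T th Y' j" by (rule st_local) (use that in simp)
    moreover have "Pa Y = Pa Y'" by (rule la) (use that in simp)
    ultimately show ?thesis by simp
  qed
  have cA: "\<And>x. (\<lambda>Y. Y x) \<in> borel_measurable (PiM ({1..j} \<times> {1..T}) MM)"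
    by (rule coordA) (use Sa in auto)
  have mst: "(\<lambda>Y. st T th Y j) \<in> measurable (PiM ({1..j} \<times> {1..T}) MM) (count_space UNIV)"
    by (rule meas_st[OF cA])
  have ma': "Measurable.pred (PiM ({1..j} \<times> {1..T}) MM) (?Pa' s)" for s
    using ma mst by measurable
  have mO_a: "Measurable.pred \<Omega> Pa" by (rule pred_lift[OF Sa la ma])
  have mO_a': "Measurable.pred \<Omega> (?Pa' s)" for s by (rule pred_lift[OF Sa la' ma'])
  have mO_b: "Measurable.pred \<Omega> (Pb s)" for s by (rule pred_lift[OF Sb lb mb])
  have "measure \<Omega> {Y \<in> space \<Omega>. Pa Y \<and> Pb (st T th Y j) Y}
      = (\<Sum>s\<in>?S. measure \<Omega> {Y \<in> space \<Omega>. (Pa Y \<and> Pb (st T th Y j) Y) \<and> st T th Y j = s})"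
  proof (rule measure_split_finite)
    fix s
    have "{Y \<in> space \<Omega>. (Pa Y \<and> Pb (st T th Y j) Y) \<and> st T th Y j = s}
        = {Y \<in> space \<Omega>. ?Pa' s Y \<and> Pb s Y}" by auto
    also have "\<dots> \<in> sets \<Omega>" using mO_a' mO_b by measurable
    finally show "{Y \<in> space \<Omega>. (Pa Y \<and> Pb (st T th Y j) Y) \<and> st T th Y j = s} \<in> sets \<Omega>" .
  qed (use stS in auto)
  also have "\<dots> = (\<Sum>s\<in>?S. measure \<Omega> {Y \<in> space \<Omega>. ?Pa' s Y \<and> Pb s Y})"
    by (intro sum.cong refl arg_cong[where f="measure \<Omega>"]) auto
  also have "\<dots> = (\<Sum>s\<in>?S. measure \<Omega> {Y \<in> space \<Omega>. ?Pa' s Y} * measure \<Omega> {Y \<in> space \<Omega>. Pb s Y})"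
    by (intro sum.cong refl indep_split[OF Sa Sb _ la' lb ma' mb]) auto
  also have "\<dots> \<le> (\<Sum>s\<in>?S. measure \<Omega> {Y \<in> space \<Omega>. ?Pa' s Y} * c)"
    by (intro sum_mono mult_left_mono c) auto
  also have "\<dots> = c * (\<Sum>s\<in>?S. measure \<Omega> {Y \<in> space \<Omega>. ?Pa' s Y})"
    by (simp only: sum_distrib_left mult.commute)
  also have "(\<Sum>s\<in>?S. measure \<Omega> {Y \<in> space \<Omega>. ?Pa' s Y}) = measure \<Omega> {Y \<in> space \<Omega>. Pa Y}"
  proof (rule measure_split_finite[symmetric])
    fix s show "{Y \<in> space \<Omega>. Pa Y \<and> st T th Y j = s} \<in> sets \<Omega>" using mO_a' by measurable
  qed (use stS in auto)
  finally show ?thesis .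
qed

end



context
  fixes N :: "(nat \<times> nat \<Rightarrow> real) measure"
  assumes coord[measurable]: "\<And>x. (\<lambda>Y. Y x) \<in> borel_measurable N"
begin

lemma meas_gd[measurable]: "Measurable.pred N (\<lambda>Y. gd T th Y i s)"
  unfolding gd_def using meas_smean[OF coord] by measurable

lemma meas_gd_st[measurable]: "Measurable.pred N (\<lambda>Y. gd T th Y i (st T th Y j))"
  by (rule measurable_compose_countable[where f="\<lambda>s Y. gd T th Y i s", OF meas_gd meas_st[OF coord]])

end

context bandit begin

abbreviation "th \<equiv> 1 - 2 * \<delta>"

abbreviation good :: "(nat \<times> nat \<Rightarrow> real) \<Rightarrow> nat \<Rightarrow> bool" where
  "good Y j \<equiv> 1 - \<delta> \<le> m (Suc j) \<and> gd T th Y (Suc j) (st T th Y j)"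

abbreviation Fl :: "(nat \<times> nat \<Rightarrow> real) \<Rightarrow> nat \<Rightarrow> bool" where
  "Fl Y j \<equiv> \<forall>i<j. \<not> good Y i"

abbreviation bb :: "nat \<Rightarrow> real" where
  "bb j \<equiv> (if m (Suc j) < 1 - 3 * \<delta> then 1 - m (Suc j) else 0)"

lemma Max_le1: "Max (m ` {1..k}) \<le> 1"
  using k1 m01 by (subst Max_le_iff) auto

lemma Max_ge: "i \<in> {1..k} \<Longrightarrow> m i \<le> Max (m ` {1..k})"
  by (rule Max_ge) auto

lemma bb_nonneg: "Suc j \<le> k \<Longrightarrow> 0 \<le> bb j"
  using m01[of "Suc j"] by auto

lemma good_end:
  assumes "gd T th Y i (st T th Y j)"
  shows "T < st T th Y j + tau T th Y i (st T th Y j)"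
proof (cases "tau T th Y i (st T th Y j) \<le> T")
  case True
  have "smean Y i (st T th Y j) (tau T th Y i (st T th Y j)) < th" by (rule tau_at[OF True])
  moreover have "1 \<le> tau T th Y i (st T th Y j)" by (rule tau_ge1)
  ultimately show ?thesis using assms unfolding gd_def by force
next
  case False then show ?thesis by simp
qed

lemma cost_pt:
  assumes t: "t \<in> {1..T}" and kk: "1 \<le> k1" "k1 \<le> k"
  shows "Max (m ` {1..k}) - m (sg_arm (2 * \<delta>) k Y t)
    \<le> of_bool (Fl Y k1) + 3 * \<delta> + (\<Sum>j<k1. bb j * of_bool (st T th Y j \<le> t \<and> t < st T th Y (Suc j)))"
proof -
  have sumnn: "0 \<le> (\<Sum>j<k1. bb j * of_bool (st T th Y j \<le> t \<and> t < st T th Y (Suc j)))"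
    using kk by (intro sum_nonneg mult_nonneg_nonneg bb_nonneg) auto
  show ?thesis
  proof (cases "Fl Y k1")
    case True
    have "sg_arm (2 * \<delta>) k Y t \<in> {1..k}" using sg_arm_range k1 t by auto
    then have "0 \<le> m (sg_arm (2 * \<delta>) k Y t)" using m01 by auto
    then show ?thesis using True Max_le1 dpos sumnn by simp
  next
    case False
    then obtain J where J: "J < k1" "good Y J" by blast
    have stJ: "T < st T th Y (Suc J)" using good_end[of Y "Suc J" J] J(2) by simp
    have t1: "1 \<le> t" "t \<le> T" using t by auto
    then have "t < st T th Y (Suc J)" using stJ by simp
    then obtain j where j: "j < Suc J" "st T th Y j \<le> t" "t < st T th Y (Suc j)"
      using st_interval_ex[OF t1(1)] by blast
    have "Suc j \<le> k" using j(1) J(1) kk by simp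
    then have "st T th Y (Suc j) \<le> st T th Y k"
      using st_smono[of T th Y] strict_mono_less_eq by blast
    then have tk: "t < st T (1 - 2 * \<delta>) Y k" using j(3) by simp
    have arm: "sg_arm (2 * \<delta>) k Y t = Suc j"
      using sg_arm_seq[OF t1 tk] j(2,3) by simp
    have c1: "Max (m ` {1..k}) - m (Suc j) \<le> 1 - m (Suc j)" using Max_le1 by simp
    show ?thesis
    proof (cases "m (Suc j) < 1 - 3 * \<delta>")
      case True
      then have "j \<noteq> J" using J(2) dpos by auto
      then have jk: "j \<in> {..<k1}" using j(1) J(1) by simp
      have "bb j * of_bool (st T th Y j \<le> t \<and> t < st T th Y (Suc j)) = 1 - m (Suc j)"
        using True j by simp
      moreover have "bb j * of_bool (st T th Y j \<le> t \<and> t < st T th Y (Suc j))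
          \<le> (\<Sum>j<k1. bb j * of_bool (st T th Y j \<le> t \<and> t < st T th Y (Suc j)))"
        by (rule member_le_sum[OF jk]) (use kk bb_nonneg in auto)
      ultimately show ?thesis unfolding arm using c1 dpos False by simp
    next
      case False2: False
      then show ?thesis unfolding arm using c1 dpos False sumnn by simp
    qed
  qed
qed

lemma count_pt:
  "card {t \<in> {1..T}. st T th Y j \<le> t \<and> t < st T th Y (Suc j)}
    \<le> 1 + card {n \<in> {1..T}. st T th Y j + n \<le> T \<and> th \<le> smean Y (Suc j) (st T th Y j) n}"
proof -
  let ?s = "st T th Y j"
  let ?N = "{n \<in> {1..T}. ?s + n \<le> T \<and> th \<le> smean Y (Suc j) ?s n}"
  have "{t \<in> {1..T}. ?s \<le> t \<and> t < st T th Y (Suc j)} \<subseteq> insert ?s ((\<lambda>n. ?s + n) ` ?N)"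
  proof
    fix t assume t: "t \<in> {t \<in> {1..T}. ?s \<le> t \<and> t < st T th Y (Suc j)}"
    show "t \<in> insert ?s ((\<lambda>n. ?s + n) ` ?N)"
    proof (cases "t = ?s")
      case False
      then have n1: "1 \<le> t - ?s" using t by auto
      have "t - ?s < tau T th Y (Suc j) ?s" using t by auto
      then have "th \<le> smean Y (Suc j) ?s (t - ?s)" by (rule tau_lt[OF n1])
      then have "t - ?s \<in> ?N" using t n1 by auto
      moreover have "t = ?s + (t - ?s)" using t by auto
      ultimately show ?thesis by blast
    qed simp
  qed
  then have "card {t \<in> {1..T}. ?s \<le> t \<and> t < st T th Y (Suc j)} \<le> card (insert ?s ((\<lambda>n. ?s + n) ` ?N))"
    by (rule card_mono[rotated]) auto
  also have "\<dots> \<le> Suc (card ((\<lambda>n. ?s + n) ` ?N))" by (rule card_insert_le_m1) auto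
  also have "\<dots> \<le> Suc (card ?N)" using card_image_le[of ?N "\<lambda>n. ?s + n"] by simp
  finally show ?thesis by simp
qed

lemma Fl_local:
  assumes "\<And>i u. i \<in> {1..j} \<Longrightarrow> Y (i, u) = Y' (i, u)"
  shows "Fl Y j = Fl Y' j"
proof -
  have "gd T th Y (Suc i) (st T th Y i) = gd T th Y' (Suc i) (st T th Y' i)" if "i < j" for i
  proof -
    have "st T th Y i = st T th Y' i" by (rule st_local) (use assms that in auto)
    moreover have "gd T th Y (Suc i) s = gd T th Y' (Suc i) s" for s
      by (rule gd_local) (use assms that in auto)
    ultimately show ?thesis by simp
  qed
  then show ?thesis by auto
qed

lemma Fl_meas:
  assumes "\<And>x. (\<lambda>Y. Y x) \<in> borel_measurable N"
  shows "Measurable.pred N (\<lambda>Y. Fl Y j)"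
  using meas_gd_st[OF assms] by measurable

lemma int_ind: "A \<in> sets \<Omega> \<Longrightarrow> integrable \<Omega> (indicator A :: _ \<Rightarrow> real)"
  using emeasure_finite[of A] by (intro integrable_real_indicator) (simp_all add: less_top[symmetric])

definition cfac :: "nat \<Rightarrow> real" where
  "cfac i = 1 - indicator {1 - \<delta>..} (m (Suc i)) * q_prob P th (m (Suc i))"

lemma q01: assumes "i \<in> {1..k}" shows "0 \<le> q_prob P th (m i)" "q_prob P th (m i) \<le> 1"
proof -
  show "0 \<le> q_prob P th (m i)" unfolding q_prob_def by simp
  have "q_prob P th (m i) \<le> measure \<Omega> {Y \<in> space \<Omega>. gd T th Y i 1}" by (rule q_le_gd[OF assms]) simp
  also have "\<dots> \<le> 1" by (rule prob_le_1)
  finally show "q_prob P th (m i) \<le> 1" .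
qed

lemma cfac01: "Suc i \<le> k \<Longrightarrow> 0 \<le> cfac i \<and> cfac i \<le> 1"
  using q01[of "Suc i"] unfolding cfac_def by (auto simp: indicator_def)

lemma fail_bound: "j \<le> k \<Longrightarrow> measure \<Omega> {Y \<in> space \<Omega>. Fl Y j} \<le> (\<Prod>i<j. cfac i)"
proof (induction j)
  case 0
  have "{Y \<in> space \<Omega>. Fl Y 0} = space \<Omega>" by simp
  then show ?case using prob_space by simp
next
  case (Suc j)
  have IH: "measure \<Omega> {Y \<in> space \<Omega>. Fl Y j} \<le> (\<Prod>i<j. cfac i)" using Suc by simp
  have ik: "Suc j \<in> {1..k}" using Suc.prems by simp
  have split: "Fl Y (Suc j) \<longleftrightarrow> Fl Y j \<and> \<not> good Y j" for Y by (auto simp: less_Suc_eq)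
  have c01: "0 \<le> cfac j" "cfac j \<le> 1" using cfac01[of j] Suc.prems by auto
  have pnn: "0 \<le> (\<Prod>i<j. cfac i)" using cfac01 Suc.prems by (intro prod_nonneg) auto
  show ?case
  proof (cases "1 - \<delta> \<le> m (Suc j)")
    case False
    then have "{Y \<in> space \<Omega>. Fl Y (Suc j)} = {Y \<in> space \<Omega>. Fl Y j}" using split by auto
    moreover have "cfac j = 1" using False unfolding cfac_def by (simp add: indicator_def)
    ultimately show ?thesis using IH by simp
  next
    case True
    have cj: "cfac j = 1 - q_prob P th (m (Suc j))" using True unfolding cfac_def by (simp add: indicator_def)
    have eq: "{Y \<in> space \<Omega>. Fl Y (Suc j)}
        = {Y \<in> space \<Omega>. Fl Y j \<and> (\<lambda>s Y. \<not> gd T th Y (Suc j) s) (st T th Y j) Y}"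
      using split True by auto
    have "measure \<Omega> {Y \<in> space \<Omega>. Fl Y j \<and> (\<lambda>s Y. \<not> gd T th Y (Suc j) s) (st T th Y j) Y}
        \<le> cfac j * measure \<Omega> {Y \<in> space \<Omega>. Fl Y j}"
    proof (rule st_split[OF Suc.prems])
      show "Fl Y j = Fl Y' j" if "\<And>i u. i \<in> {1..j} \<Longrightarrow> Y (i, u) = Y' (i, u)" for Y Y'
        by (rule Fl_local) (rule that)
      show "Measurable.pred (PiM ({1..j} \<times> {1..T}) MM) (\<lambda>Y. Fl Y j)"
        by (rule Fl_meas, rule coordA) (use Suc.prems in auto)
      show "(\<not> gd T th Y (Suc j) s) = (\<not> gd T th Y' (Suc j) s)"
        if "\<And>i u. i \<in> {Suc j} \<Longrightarrow> Y (i, u) = Y' (i, u)" for s Y Y'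
        using gd_local[of Y "Suc j" Y'] that by simp
      have cB: "\<And>x. (\<lambda>Y. Y x) \<in> borel_measurable (PiM ({Suc j} \<times> {1..T}) MM)"
        by (rule coordA) (use ik in auto)
      show "Measurable.pred (PiM ({Suc j} \<times> {1..T}) MM) (\<lambda>Y. \<not> gd T th Y (Suc j) s)" for s
        using meas_gd[OF cB] by measurable
      show "measure \<Omega> {Y \<in> space \<Omega>. \<not> gd T th Y (Suc j) s} \<le> cfac j" if "1 \<le> s" for s
      proof -
        have mg: "{Y \<in> space \<Omega>. gd T th Y (Suc j) s} \<in> sets \<Omega>" using meas_gd[OF coordO] by measurable
        have "{Y \<in> space \<Omega>. \<not> gd T th Y (Suc j) s} = space \<Omega> - {Y \<in> space \<Omega>. gd T th Y (Suc j) s}" by auto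
        then have "measure \<Omega> {Y \<in> space \<Omega>. \<not> gd T th Y (Suc j) s} = 1 - measure \<Omega> {Y \<in> space \<Omega>. gd T th Y (Suc j) s}"
          using prob_compl[OF mg] by simp
        then show ?thesis using q_le_gd[OF ik that] cj by simp
      qed
    qed
    also have "\<dots> \<le> cfac j * (\<Prod>i<j. cfac i)" by (rule mult_left_mono[OF IH c01(1)])
    finally show ?thesis unfolding eq by (simp add: mult.commute)
  qed
qed

lemma E_bound:
  assumes j: "Suc j \<le> k" and lt: "m (Suc j) < th" and n: "1 \<le> n"
  shows "measure \<Omega> {Y \<in> space \<Omega>. st T th Y j + n \<le> T \<and> th \<le> smean Y (Suc j) (st T th Y j) n}
    \<le> exp (- (real n * (th - m (Suc j))\<^sup>2 / 2))"
proof -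
  have ik: "Suc j \<in> {1..k}" using j by simp
  have "measure \<Omega> {Y \<in> space \<Omega>. True \<and> (\<lambda>s Y. s + n \<le> T \<and> th \<le> smean Y (Suc j) s n) (st T th Y j) Y}
      \<le> exp (- (real n * (th - m (Suc j))\<^sup>2 / 2)) * measure \<Omega> {Y \<in> space \<Omega>. True}"
  proof (rule st_split[OF j])
    have cB: "\<And>x. (\<lambda>Y. Y x) \<in> borel_measurable (PiM ({Suc j} \<times> {1..T}) MM)"
      by (rule coordA) (use ik in auto)
    show "Measurable.pred (PiM ({Suc j} \<times> {1..T}) MM) (\<lambda>Y. s + n \<le> T \<and> th \<le> smean Y (Suc j) s n)" for s
      using meas_smean[OF cB] by measurable
    show "(s + n \<le> T \<and> th \<le> smean Y (Suc j) s n) = (s + n \<le> T \<and> th \<le> smean Y' (Suc j) s n)"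
      if "\<And>i u. i \<in> {Suc j} \<Longrightarrow> Y (i, u) = Y' (i, u)" for s Y Y'
      using smean_local[of Y "Suc j" Y' s n] that by simp
    show "measure \<Omega> {Y \<in> space \<Omega>. s + n \<le> T \<and> th \<le> smean Y (Suc j) s n} \<le> exp (- (real n * (th - m (Suc j))\<^sup>2 / 2))"
      if s: "1 \<le> s" for s
    proof (cases "s + n \<le> T")
      case True
      then have "{Y \<in> space \<Omega>. s + n \<le> T \<and> th \<le> smean Y (Suc j) s n} = {Y \<in> space \<Omega>. th \<le> smean Y (Suc j) s n}" by simp
      moreover have "measure \<Omega> {Y \<in> space \<Omega>. th \<le> smean Y (Suc j) s n} \<le> exp (- (real n * (th - m (Suc j))\<^sup>2 / 2))"
        by (rule chernoff_Omega[OF ik lt n s]) (use True in simp)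
      ultimately show ?thesis by simp
    qed simp
  qed simp_all
  then show ?thesis using prob_space by simp
qed

lemma card_sum_bool: "real (card {t \<in> A. Q t}) = (\<Sum>t\<in>A. if Q t then 1 else 0)" if "finite A"
  using that by (simp add: sum.inter_filter[symmetric])

lemma N_bound:
  assumes j: "Suc j \<le> k" and lt: "m (Suc j) < th"
  shows "(\<Sum>t\<in>{1..T}. measure \<Omega> {Y \<in> space \<Omega>. st T th Y j \<le> t \<and> t < st T th Y (Suc j)})
    \<le> 1 + (\<Sum>n\<in>{1..T}. exp (- (real n * (th - m (Suc j))\<^sup>2 / 2)))"
proof -
  let ?I = "\<lambda>t. {Y \<in> space \<Omega>. st T th Y j \<le> t \<and> t < st T th Y (Suc j)}"
  let ?E = "\<lambda>n. {Y \<in> space \<Omega>. st T th Y j + n \<le> T \<and> th \<le> smean Y (Suc j) (st T th Y j) n}"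
  have mst: "\<And>j. (\<lambda>Y. st T th Y j) \<in> measurable \<Omega> (count_space UNIV)" by (rule meas_st[OF coordO])
  have msm: "\<And>s n. (\<lambda>Y. smean Y (Suc j) s n) \<in> borel_measurable \<Omega>" by (rule meas_smean[OF coordO])
  have mI: "?I t \<in> sets \<Omega>" for t using mst by measurable
  have mE: "?E n \<in> sets \<Omega>" for n
  proof -
    have "Measurable.pred \<Omega> (\<lambda>Y. (\<lambda>s Y. s + n \<le> T \<and> th \<le> smean Y (Suc j) s n) (st T th Y j) Y)"
      by (rule measurable_compose_countable[OF _ mst]) (use msm in measurable)
    then show ?thesis by (simp add: pred_def)
  qed
  have "(\<Sum>t\<in>{1..T}. measure \<Omega> (?I t)) = (\<Sum>t\<in>{1..T}. \<integral>Y. indicator (?I t) Y \<partial>\<Omega>)"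
    using mI by simp
  also have "\<dots> = (\<integral>Y. (\<Sum>t\<in>{1..T}. indicator (?I t) Y) \<partial>\<Omega>)"
    using Bochner_Integration.integral_sum[of "{1..T}" \<Omega> "\<lambda>t. indicator (?I t) :: _ \<Rightarrow> real"] mI int_ind by simp
  also have "\<dots> \<le> (\<integral>Y. 1 + (\<Sum>n\<in>{1..T}. indicator (?E n) Y) \<partial>\<Omega>)"
  proof (rule integral_mono)
    show "integrable \<Omega> (\<lambda>Y. \<Sum>t\<in>{1..T}. indicator (?I t) Y :: real)" by (intro Bochner_Integration.integrable_sum int_ind mI)
    show "integrable \<Omega> (\<lambda>Y. 1 + (\<Sum>n\<in>{1..T}. indicator (?E n) Y :: real))"
      by (intro Bochner_Integration.integrable_add integrable_const Bochner_Integration.integrable_sum int_ind mE)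
    fix Y assume Y: "Y \<in> space \<Omega>"
    have "(\<Sum>t\<in>{1..T}. indicator (?I t) Y :: real) = (\<Sum>t\<in>{1..T}. if st T th Y j \<le> t \<and> t < st T th Y (Suc j) then 1 else 0)"
      using Y by (intro sum.cong) (simp_all add: indicator_def)
    also have "\<dots> = real (card {t \<in> {1..T}. st T th Y j \<le> t \<and> t < st T th Y (Suc j)})"
      by (rule card_sum_bool[symmetric]) simp
    also have "\<dots> \<le> real (1 + card {n \<in> {1..T}. st T th Y j + n \<le> T \<and> th \<le> smean Y (Suc j) (st T th Y j) n})"
      using count_pt[of Y j] by linarith
    also have "\<dots> = 1 + real (card {n \<in> {1..T}. st T th Y j + n \<le> T \<and> th \<le> smean Y (Suc j) (st T th Y j) n})"
      by simp
    also have "real (card {n \<in> {1..T}. st T th Y j + n \<le> T \<and> th \<le> smean Y (Suc j) (st T th Y j) n})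
        = (\<Sum>n\<in>{1..T}. if st T th Y j + n \<le> T \<and> th \<le> smean Y (Suc j) (st T th Y j) n then 1 else 0)"
      by (rule card_sum_bool) simp
    also have "\<dots> = (\<Sum>n\<in>{1..T}. indicator (?E n) Y)"
      using Y by (intro sum.cong) (simp_all add: indicator_def)
    finally show "(\<Sum>t\<in>{1..T}. indicator (?I t) Y) \<le> 1 + (\<Sum>n\<in>{1..T}. indicator (?E n) Y :: real)" .
  qed
  also have "\<dots> = 1 + (\<Sum>n\<in>{1..T}. measure \<Omega> (?E n))"
  proof -
    have a: "(\<integral>Y. 1 + (\<Sum>n\<in>{1..T}. indicator (?E n) Y) \<partial>\<Omega>) = (\<integral>Y. 1 \<partial>\<Omega>) + (\<integral>Y. (\<Sum>n\<in>{1..T}. indicator (?E n) Y :: real) \<partial>\<Omega>)"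
      by (rule Bochner_Integration.integral_add) (intro integrable_const Bochner_Integration.integrable_sum int_ind mE)+
    have b: "(\<integral>Y. (\<Sum>n\<in>{1..T}. indicator (?E n) Y :: real) \<partial>\<Omega>) = (\<Sum>n\<in>{1..T}. \<integral>Y. indicator (?E n) Y \<partial>\<Omega>)"
      using Bochner_Integration.integral_sum[of "{1..T}" \<Omega> "\<lambda>n. indicator (?E n) :: _ \<Rightarrow> real"] mE int_ind by simp
    have c: "(\<Sum>n\<in>{1..T}. \<integral>Y. indicator (?E n) Y \<partial>\<Omega>) = (\<Sum>n\<in>{1..T}. measure \<Omega> (?E n))"
      using mE by (intro sum.cong) simp_all
    have d: "(\<integral>Y. 1 \<partial>\<Omega>) = (1::real)" using prob_space by simp
    show ?thesis unfolding a b c d ..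
  qed
  also have "\<dots> \<le> 1 + (\<Sum>n\<in>{1..T}. exp (- (real n * (th - m (Suc j))\<^sup>2 / 2)))"
    using E_bound[OF j lt] by (intro add_left_mono sum_mono) auto
  finally show ?thesis .
qed

end



lemma geom_sum_bound:
  fixes x :: real assumes x: "0 < x"
  shows "(\<Sum>n\<in>{1..T}. exp (- (real n * x))) \<le> 1 / x"
proof -
  define r where "r = exp (- x)"
  have r: "0 < r" "r < 1" using x by (auto simp: r_def)
  have e: "exp (- (real n * x)) = r ^ n" for n
    using exp_of_nat_mult[of n "- x"] by (simp add: r_def)
  have "(\<Sum>n\<in>{1..T}. exp (- (real n * x))) = (\<Sum>n<T. r ^ Suc n)"
    unfolding e using sum.atLeast1_atMost_eq[of "\<lambda>n. r ^ n" T] by simp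
  also have "\<dots> = r * (\<Sum>n<T. r ^ n)" by (simp add: sum_distrib_left)
  also have "\<dots> = r * ((1 - r ^ T) / (1 - r))" using r by (simp add: sum_gp_strict)
  also have "\<dots> \<le> r * (1 / (1 - r))"
    using r by (intro mult_left_mono divide_right_mono) auto
  also have "\<dots> = 1 / (exp x - 1)"
    using x by (simp add: r_def exp_minus field_simps)
  also have "\<dots> \<le> 1 / x"
  proof -
    have "x \<le> exp x - 1" using exp_ge_add_one_self[of x] by linarith
    then show ?thesis using x by (intro divide_left_mono) auto
  qed
  finally show ?thesis .
qed

lemma geom_bound:
  fixes \<mu> \<delta> :: real and T :: nat
  assumes mu: "0 \<le> \<mu>" "\<mu> < 1 - 3 * \<delta>" and d: "0 < \<delta>"
  shows "(1 - \<mu>) * (1 + (\<Sum>n\<in>{1..T}. exp (- (real n * (1 - 2 * \<delta> - \<mu>)\<^sup>2 / 2))))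
    \<le> 1 + 3 / (((1 - exp (-1)) / 2) * (1 - 2 * \<delta> - \<mu>))"
proof -
  define D where "D = 1 - 2 * \<delta> - \<mu>"
  have D: "0 < D" "\<delta> < D" using mu d by (auto simp: D_def)
  let ?S = "\<Sum>n\<in>{1..T}. exp (- (real n * D\<^sup>2 / 2))"
  have S: "?S \<le> 2 / D\<^sup>2"
  proof -
    have "?S = (\<Sum>n\<in>{1..T}. exp (- (real n * (D\<^sup>2 / 2))))" by simp
    also have "\<dots> \<le> 1 / (D\<^sup>2 / 2)" by (rule geom_sum_bound) (use D in simp)
    finally show ?thesis by simp
  qed
  have S0: "0 \<le> ?S" by (intro sum_nonneg) auto
  have m1: "0 \<le> 1 - \<mu>" "1 - \<mu> \<le> 1" "1 - \<mu> \<le> 3 * D" using mu d by (auto simp: D_def)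
  have "(1 - \<mu>) * (1 + ?S) = (1 - \<mu>) + (1 - \<mu>) * ?S" by (simp add: algebra_simps)
  also have "\<dots> \<le> 1 + (3 * D) * (2 / D\<^sup>2)"
    using m1 S S0 by (intro add_mono mult_mono) auto
  also have "(3 * D) * (2 / D\<^sup>2) = 6 / D" using D by (simp add: power2_eq_square field_simps)
  also have "6 / D \<le> 3 / (((1 - exp (-1)) / 2) * D)"
  proof -
    have e: "0 < exp (-1::real)" "exp (-1::real) < 1" by auto
    have "3 / (((1 - exp (-1)) / 2) * D) = 6 / ((1 - exp (-1)) * D)" by (simp add: field_simps)
    also have "6 / D \<le> 6 / ((1 - exp (-1)) * D)"
      using D e by (intro divide_left_mono mult_pos_pos) (auto simp: mult_le_cancel_right1)
    finally show ?thesis by linarith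
  qed
  finally show ?thesis by (simp add: D_def)
qed

context bandit begin

abbreviation fB :: "real \<Rightarrow> real" where
  "fB \<mu> \<equiv> (if \<mu> < 1 - 3 * \<delta> then min (1 + 3 / (((1 - exp (-1)) / 2) * (1 - 2 * \<delta> - \<mu>))) (real T * (1 - \<mu>)) else 0)"

lemma bb_N:
  assumes j: "Suc j \<le> k"
  shows "bb j * (\<Sum>t\<in>{1..T}. measure \<Omega> {Y \<in> space \<Omega>. st T th Y j \<le> t \<and> t < st T th Y (Suc j)}) \<le> fB (m (Suc j))"
proof (cases "m (Suc j) < 1 - 3 * \<delta>")
  case False then show ?thesis by simp
next
  case True
  let ?S = "\<Sum>t\<in>{1..T}. measure \<Omega> {Y \<in> space \<Omega>. st T th Y j \<le> t \<and> t < st T th Y (Suc j)}"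
  have mu: "0 \<le> m (Suc j)" "m (Suc j) \<le> 1" using m01[of "Suc j"] j by auto
  have b: "bb j = 1 - m (Suc j)" using True by simp
  have S1: "?S \<le> real T"
  proof -
    have "?S \<le> (\<Sum>t\<in>{1..T}. 1)" by (intro sum_mono prob_le_1)
    then show ?thesis by simp
  qed
  have lt: "m (Suc j) < th" using True dpos by simp
  have S2: "?S \<le> 1 + (\<Sum>n\<in>{1..T}. exp (- (real n * (th - m (Suc j))\<^sup>2 / 2)))"
    by (rule N_bound[OF j lt])
  have "(1 - m (Suc j)) * ?S \<le> (1 - m (Suc j)) * (1 + (\<Sum>n\<in>{1..T}. exp (- (real n * (th - m (Suc j))\<^sup>2 / 2))))"
    using mu S2 by (intro mult_left_mono) auto
  also have "\<dots> \<le> 1 + 3 / (((1 - exp (-1)) / 2) * (1 - 2 * \<delta> - m (Suc j)))"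
    using geom_bound[OF mu(1) True dpos, of T] by (simp add: diff_diff_eq)
  finally have A: "(1 - m (Suc j)) * ?S \<le> 1 + 3 / (((1 - exp (-1)) / 2) * (1 - 2 * \<delta> - m (Suc j)))" .
  have B: "(1 - m (Suc j)) * ?S \<le> real T * (1 - m (Suc j))"
  proof -
    have "(1 - m (Suc j)) * ?S \<le> (1 - m (Suc j)) * real T" using mu S1 by (intro mult_left_mono) auto
    then show ?thesis by (simp add: mult.commute)
  qed
  show ?thesis unfolding b using A B True by simp
qed

lemma int_arm: assumes "1 \<le> t" shows "integrable \<Omega> (\<lambda>Y. m (sg_arm (2 * \<delta>) k Y t))"
proof (rule integrable_const_bound[where B=1])
  have "(\<lambda>Y. sg_arm (2 * \<delta>) k Y t) \<in> measurable \<Omega> (count_space UNIV)" by (rule meas_sg_arm[OF coordO])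
  from measurable_compose[OF this, of m borel]
  show "(\<lambda>Y. m (sg_arm (2 * \<delta>) k Y t)) \<in> borel_measurable \<Omega>" by simp
  show "AE Y in \<Omega>. norm (m (sg_arm (2 * \<delta>) k Y t)) \<le> 1"
    using sg_arm_range[OF k1 assms] m01 by (intro AE_I2) (auto simp: abs_le_iff)
qed

lemma regret_bound:
  assumes kk: "1 \<le> k1" "k1 \<le> k"
  shows "sg_regret P (2 * \<delta>) k T m \<le> real T * (\<Prod>i<k1. cfac i) + 3 * real T * \<delta> + (\<Sum>i<k1. fB (m (Suc i)))"
proof -
  have rt: "reward_table P k T m = \<Omega>" by (simp add: reward_table_def)
  let ?Mx = "Max (m ` {1..k})"
  let ?Fs = "{Y \<in> space \<Omega>. Fl Y k1}"
  let ?It = "\<lambda>j t. {Y \<in> space \<Omega>. st T th Y j \<le> t \<and> t < st T th Y (Suc j)}"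
  let ?U = "\<lambda>t Y. indicator ?Fs Y + 3 * \<delta> + (\<Sum>j<k1. bb j * indicator (?It j t) Y)"
  have mst: "\<And>j. (\<lambda>Y. st T th Y j) \<in> measurable \<Omega> (count_space UNIV)" by (rule meas_st[OF coordO])
  have mFs: "?Fs \<in> sets \<Omega>" using Fl_meas[OF coordO, of k1] unfolding pred_def .
  have mIt: "?It j t \<in> sets \<Omega>" for j t using mst by measurable
  have intU: "integrable \<Omega> (?U t)" for t
    by (intro Bochner_Integration.integrable_add integrable_const Bochner_Integration.integrable_sum
        integrable_mult_right int_ind mFs mIt)
  have step: "?Mx - (\<integral>Y. m (sg_arm (2 * \<delta>) k Y t) \<partial>\<Omega>)
      \<le> measure \<Omega> ?Fs + 3 * \<delta> + (\<Sum>j<k1. bb j * measure \<Omega> (?It j t))" if t: "t \<in> {1..T}" for t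
  proof -
    have t1: "1 \<le> t" using t by simp
    have "?Mx - (\<integral>Y. m (sg_arm (2 * \<delta>) k Y t) \<partial>\<Omega>) = (\<integral>Y. ?Mx - m (sg_arm (2 * \<delta>) k Y t) \<partial>\<Omega>)"
    proof -
      have "(\<integral>Y. ?Mx - m (sg_arm (2 * \<delta>) k Y t) \<partial>\<Omega>) = (\<integral>Y. ?Mx \<partial>\<Omega>) - (\<integral>Y. m (sg_arm (2 * \<delta>) k Y t) \<partial>\<Omega>)"
        by (rule Bochner_Integration.integral_diff[OF integrable_const int_arm[OF t1]])
      moreover have "(\<integral>Y. ?Mx \<partial>\<Omega>) = ?Mx" using prob_space by simp
      ultimately show ?thesis by simp
    qed
    also have "\<dots> \<le> (\<integral>Y. ?U t Y \<partial>\<Omega>)"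
    proof (rule integral_mono)
      show "integrable \<Omega> (\<lambda>Y. ?Mx - m (sg_arm (2 * \<delta>) k Y t))"
        by (intro Bochner_Integration.integrable_diff integrable_const int_arm[OF t1])
      show "integrable \<Omega> (?U t)" by (rule intU)
      fix Y assume Y: "Y \<in> space \<Omega>"
      have e1: "indicator ?Fs Y = (of_bool (Fl Y k1) :: real)" using Y by (simp add: indicator_def)
      have e2: "indicator (?It j t) Y = (of_bool (st T th Y j \<le> t \<and> t < st T th Y (Suc j)) :: real)" for j
        using Y by (simp add: indicator_def)
      show "?Mx - m (sg_arm (2 * \<delta>) k Y t) \<le> ?U t Y"
        unfolding e1 e2 by (rule cost_pt[OF t kk])
    qed
    also have "(\<integral>Y. ?U t Y \<partial>\<Omega>) = measure \<Omega> ?Fs + 3 * \<delta> + (\<Sum>j<k1. bb j * measure \<Omega> (?It j t))"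
    proof -
      have a: "(\<integral>Y. ?U t Y \<partial>\<Omega>) = (\<integral>Y. indicator ?Fs Y + 3 * \<delta> \<partial>\<Omega>) + (\<integral>Y. (\<Sum>j<k1. bb j * indicator (?It j t) Y) \<partial>\<Omega>)"
        by (rule Bochner_Integration.integral_add)
           (intro Bochner_Integration.integrable_add integrable_const Bochner_Integration.integrable_sum
             integrable_mult_right int_ind mFs mIt)+
      have b1: "(\<integral>Y. indicator ?Fs Y + 3 * \<delta> \<partial>\<Omega>) = (\<integral>Y. indicator ?Fs Y \<partial>\<Omega>) + (\<integral>Y. 3 * \<delta> \<partial>\<Omega>)"
        by (rule Bochner_Integration.integral_add[OF int_ind[OF mFs] integrable_const])
      have b2: "(\<integral>Y. indicator ?Fs Y \<partial>\<Omega>) = measure \<Omega> ?Fs"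
        using Bochner_Integration.integral_indicator[of \<Omega> ?Fs] by (simp only: Int_absorb2[OF sets.sets_into_space[OF mFs]])
      have b3: "(\<integral>Y. 3 * \<delta> \<partial>\<Omega>) = 3 * \<delta>" using prob_space by simp
      have b: "(\<integral>Y. indicator ?Fs Y + 3 * \<delta> \<partial>\<Omega>) = measure \<Omega> ?Fs + 3 * \<delta>"
        unfolding b1 b2 b3 ..
      have c1: "(\<integral>Y. (\<Sum>j<k1. bb j * indicator (?It j t) Y) \<partial>\<Omega>) = (\<Sum>j<k1. (\<integral>Y. bb j * indicator (?It j t) Y \<partial>\<Omega>))"
        by (rule Bochner_Integration.integral_sum) (rule integrable_mult_right, rule int_ind[OF mIt])
      have c2: "(\<integral>Y. bb j * indicator (?It j t) Y \<partial>\<Omega>) = bb j * measure \<Omega> (?It j t)" for j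
      proof -
        have "(\<integral>Y. bb j * indicator (?It j t) Y \<partial>\<Omega>) = bb j * (\<integral>Y. indicator (?It j t) Y \<partial>\<Omega>)"
          by (rule Bochner_Integration.integral_mult_right) (rule int_ind[OF mIt])
        also have "(\<integral>Y. indicator (?It j t) Y \<partial>\<Omega>) = measure \<Omega> (?It j t)"
          using Bochner_Integration.integral_indicator[of \<Omega> "?It j t"] by (simp only: Int_absorb2[OF sets.sets_into_space[OF mIt]])
        finally show ?thesis .
      qed
      have c: "(\<integral>Y. (\<Sum>j<k1. bb j * indicator (?It j t) Y) \<partial>\<Omega>) = (\<Sum>j<k1. bb j * measure \<Omega> (?It j t))"
        unfolding c1 c2 ..
      show ?thesis unfolding a b c ..
    qed
    finally show ?thesis .
  qed
  have "sg_regret P (2 * \<delta>) k T m = (\<Sum>t\<in>{1..T}. ?Mx - (\<integral>Y. m (sg_arm (2 * \<delta>) k Y t) \<partial>\<Omega>))"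
    unfolding sg_regret_def rt by (simp add: sum_subtractf)
  also have "\<dots> \<le> (\<Sum>t\<in>{1..T}. measure \<Omega> ?Fs + 3 * \<delta> + (\<Sum>j<k1. bb j * measure \<Omega> (?It j t)))"
    by (rule sum_mono) (rule step)
  also have "\<dots> = real T * measure \<Omega> ?Fs + 3 * real T * \<delta> + (\<Sum>j<k1. bb j * (\<Sum>t\<in>{1..T}. measure \<Omega> (?It j t)))"
  proof -
    have "(\<Sum>t\<in>{1..T}. measure \<Omega> ?Fs + 3 * \<delta> + (\<Sum>j<k1. bb j * measure \<Omega> (?It j t)))
        = (\<Sum>t\<in>{1..T}. measure \<Omega> ?Fs + 3 * \<delta>) + (\<Sum>t\<in>{1..T}. \<Sum>j<k1. bb j * measure \<Omega> (?It j t))"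
      by (rule sum.distrib)
    also have "(\<Sum>t\<in>{1..T}. \<Sum>j<k1. bb j * measure \<Omega> (?It j t)) = (\<Sum>j<k1. \<Sum>t\<in>{1..T}. bb j * measure \<Omega> (?It j t))"
      by (rule sum.swap)
    also have "\<dots> = (\<Sum>j<k1. bb j * (\<Sum>t\<in>{1..T}. measure \<Omega> (?It j t)))"
      by (simp only: sum_distrib_left)
    also have "(\<Sum>t\<in>{1..T}. measure \<Omega> ?Fs + 3 * \<delta>) = real T * measure \<Omega> ?Fs + 3 * real T * \<delta>"
      by (simp add: algebra_simps)
    finally show ?thesis .
  qed
  also have "\<dots> \<le> real T * (\<Prod>i<k1. cfac i) + 3 * real T * \<delta> + (\<Sum>i<k1. fB (m (Suc i)))"
  proof (intro add_mono mult_left_mono order_refl sum_mono)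
    show "measure \<Omega> ?Fs \<le> (\<Prod>i<k1. cfac i)" by (rule fail_bound[OF kk(2)])
    fix j assume "j \<in> {..<k1}"
    then have "Suc j \<le> k" using kk by simp
    then show "bb j * (\<Sum>t\<in>{1..T}. measure \<Omega> (?It j t)) \<le> fB (m (Suc j))" by (rule bb_N)
  qed auto
  finally show ?thesis .
qed

end




lemma regret_le_T:
  assumes k: "1 \<le> k" and m: "\<And>i. i \<in> {1..k} \<Longrightarrow> m i \<in> {0..1}"
  shows "sg_regret P \<upsilon> k T m \<le> real T"
proof -
  have Mx: "Max (m ` {1..k}) \<le> 1" using k m by (subst Max_le_iff) auto
  have nn: "0 \<le> (\<integral>Y. m (sg_arm \<upsilon> k Y t) \<partial>reward_table P k T m)" if "t \<in> {1..T}" for t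
  proof (rule Bochner_Integration.integral_nonneg)
    fix Y
    have "sg_arm \<upsilon> k Y t \<in> {1..k}" using sg_arm_range[OF k] that by simp
    then show "0 \<le> m (sg_arm \<upsilon> k Y t)" using m by auto
  qed
  have "0 \<le> (\<Sum>t\<in>{1..T}. \<integral>Y. m (sg_arm \<upsilon> k Y t) \<partial>reward_table P k T m)" by (intro sum_nonneg nn)
  moreover have "real T * Max (m ` {1..k}) \<le> real T" using Mx by (simp add: mult_left_le)
  ultimately show ?thesis unfolding sg_regret_def by linarith
qed

theorem lemma11:
  fixes P :: "real \<Rightarrow> real measure" and \<Gamma> :: "real measure" and g :: "real \<Rightarrow> ennreal"
    and \<delta> :: real and k k\<^sub>1 T :: nat
  assumes prior: "\<Gamma> = density (restrict_space lborel {0..1}) g"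
    and g_meas: "g \<in> borel_measurable (restrict_space lborel {0..1})"
    and prior_prob: "prob_space \<Gamma>"
    and kernel: "P \<in> restrict_space borel {0..1} \<rightarrow>\<^sub>M prob_algebra borel"
    and mean: "\<forall>\<mu>\<in>{0..1}. integrable (P \<mu>) (\<lambda>z. z) \<and> (\<integral>z. z \<partial>P \<mu>) = \<mu>"
    and subg: "\<forall>\<mu>\<in>{0..1}. \<forall>s::real. integrable (P \<mu>) (\<lambda>z. exp (s * (z - \<mu>)))
                  \<and> (\<integral>z. exp (s * (z - \<mu>)) \<partial>P \<mu>) \<le> exp (s\<^sup>2 / 2)"
    and \<delta>_pos: "\<delta> > 0"
    and k1: "1 \<le> k\<^sub>1" "k\<^sub>1 \<le> k"
  shows "sg_BR \<Gamma> P (2 * \<delta>) k T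
    \<le> real T * (1 - (\<integral>\<mu>. indicator {1 - \<delta>..} \<mu> * q_prob P (1 - 2 * \<delta>) \<mu> \<partial>\<Gamma>)) ^ k\<^sub>1
       + 3 * real T * \<delta>
       + real k\<^sub>1 * (\<integral>\<mu>. (if \<mu> < 1 - 3 * \<delta>
            then min (1 + 3 / (((1 - exp (-1)) / 2) * (1 - 2 * \<delta> - \<mu>))) (real T * (1 - \<mu>))
            else 0) \<partial>\<Gamma>)"
proof -
  let ?Gk = "\<Pi>\<^sub>M i\<in>{1..k}. \<Gamma>"
  let ?h = "\<lambda>\<mu>. indicator {1 - \<delta>..} \<mu> * q_prob P (1 - 2 * \<delta>) \<mu> :: real"
  let ?f = "\<lambda>\<mu>. (if \<mu> < 1 - 3 * \<delta>
            then min (1 + 3 / (((1 - exp (-1)) / 2) * (1 - 2 * \<delta> - \<mu>))) (real T * (1 - \<mu>))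
            else 0)"
  have kpos: "1 \<le> k" using k1 by simp
  interpret G: prob_space \<Gamma> by (rule prior_prob)
  interpret PS: product_prob_space "\<lambda>_. \<Gamma>" "{1..k}" by unfold_locales
  have pGk: "prob_space ?Gk" by (rule prob_space_PiM) (rule prior_prob)
  have fmGk: "finite_measure ?Gk" using pGk by (simp add: prob_space_def)
  have spG: "space \<Gamma> = {0..1}" using prior by simp
  have setsG: "sets \<Gamma> = sets (restrict_space borel {0..1})" using prior by (simp add: sets_restrict_space)
  have Pk: "prob_space (P \<mu>) \<and> sets (P \<mu>) = sets borel" if "\<mu> \<in> {0..1}" for \<mu>
  proof -
    have "P \<mu> \<in> space (prob_algebra borel)" by (rule measurable_space[OF kernel]) (use that in simp)
    then show ?thesis by (simp add: space_prob_algebra)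
  qed
  have mspace: "m i \<in> {0..1}" if "m \<in> space ?Gk" "i \<in> {1..k}" for m i
    using that spG by (auto simp: space_PiM)
  have f_nn: "0 \<le> ?f \<mu>" if "\<mu> \<in> {0..1}" for \<mu>
  proof -
    have "0 < ((1 - exp (-1)) / 2) * (1 - 2 * \<delta> - \<mu>)" if "\<mu> < 1 - 3 * \<delta>"
      using that \<delta>_pos by (intro mult_pos_pos) auto
    then show ?thesis using \<open>\<mu> \<in> {0..1}\<close> by auto
  qed
  have intf_nn: "0 \<le> (\<integral>\<mu>. ?f \<mu> \<partial>\<Gamma>)"
    by (rule Bochner_Integration.integral_nonneg) (use f_nn spG in auto)
  have q01: "0 \<le> q_prob P (1 - 2 * \<delta>) \<mu> \<and> q_prob P (1 - 2 * \<delta>) \<mu> \<le> 1" if "\<mu> \<in> {0..1}" for \<mu>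
  proof -
    interpret PU: prob_space "\<Pi>\<^sub>M n\<in>(UNIV::nat set). P \<mu>"
      by (rule prob_space_PiM) (use Pk that in blast)
    show ?thesis unfolding q_prob_def by simp
  qed
  have h01: "0 \<le> ?h \<mu> \<and> ?h \<mu> \<le> 1" if "\<mu> \<in> {0..1}" for \<mu>
    using q01[OF that] by (auto simp: indicator_def)
  show ?thesis
  proof (cases "T = 0 \<or> \<not> integrable \<Gamma> ?h")
    case True
    have "sg_BR \<Gamma> P (2 * \<delta>) k T \<le> (\<integral>m. real T \<partial>?Gk)"
      unfolding sg_BR_def
    proof (rule integral_mono')
      show "integrable ?Gk (\<lambda>m. real T)" by (rule finite_measure.integrable_const[OF fmGk])
      fix m assume m: "m \<in> space ?Gk"
      show "sg_regret P (2 * \<delta>) k T m \<le> real T" by (rule regret_le_T[OF kpos]) (rule mspace[OF m])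
    qed simp
    also have "\<dots> = real T" using prob_space.prob_space[OF pGk] by simp
    also have "real T \<le> real T * (1 - (\<integral>\<mu>. ?h \<mu> \<partial>\<Gamma>)) ^ k\<^sub>1 + 3 * real T * \<delta> + real k\<^sub>1 * (\<integral>\<mu>. ?f \<mu> \<partial>\<Gamma>)"
    proof -
      have a: "0 \<le> 3 * real T * \<delta>" using \<delta>_pos by simp
      have b: "0 \<le> real k\<^sub>1 * (\<integral>\<mu>. ?f \<mu> \<partial>\<Gamma>)" using intf_nn by simp
      show ?thesis
      proof (cases "T = 0")
        case True then show ?thesis using b by simp
      next
        case False
        then have "\<not> integrable \<Gamma> ?h" using \<open>T = 0 \<or> \<not> integrable \<Gamma> ?h\<close> by simp
        then have "(\<integral>\<mu>. ?h \<mu> \<partial>\<Gamma>) = 0" by (rule not_integrable_integral_eq)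
        then show ?thesis using a b by simp
      qed
    qed
    finally show ?thesis .
  next
    case False
    then have T1: "1 \<le> T" and inth: "integrable \<Gamma> ?h" by auto
    have hmeas: "?h \<in> borel_measurable \<Gamma>" using inth by (rule borel_measurable_integrable)
    have idm[measurable]: "(\<lambda>x::real. x) \<in> borel_measurable \<Gamma>"
      by (subst measurable_cong_sets[OF setsG refl]) (rule measurable_restrict_space1, simp)
    have fmeas[measurable]: "?f \<in> borel_measurable \<Gamma>" by measurable
    let ?g = "\<lambda>\<mu>. 1 - ?h \<mu>"
    have intg: "integrable \<Gamma> ?g" by (rule Bochner_Integration.integrable_diff[OF G.integrable_const inth])
    have intf: "integrable \<Gamma> ?f"
    proof (rule G.integrable_const_bound[where B="real T"])
      show "AE x in \<Gamma>. norm (?f x) \<le> real T"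
      proof (rule AE_I2)
        fix x assume "x \<in> space \<Gamma>"
        then have x: "0 \<le> x" "x \<le> 1" using spG by auto
        have "real T * (1 - x) \<le> real T" using x by (simp add: mult_left_le)
        moreover have "0 \<le> ?f x" using f_nn x by simp
        ultimately show "norm (?f x) \<le> real T" by (auto simp: min_def)
      qed
    qed (rule fmeas)
    have comp: "(\<lambda>m. m j) \<in> measurable ?Gk \<Gamma>" if "j \<in> {1..k}" for j
      using that by (rule measurable_component_singleton)
    have distr_j: "distr ?Gk \<Gamma> (\<lambda>m. m j) = \<Gamma>" if "j \<in> {1..k}" for j
      using PS.PiM_component[OF that] by simp
    have intf_j: "integrable ?Gk (\<lambda>m. ?f (m j))" if "j \<in> {1..k}" for j
      using integrable_distr_eq[OF comp[OF that] fmeas] intf distr_j[OF that] by simp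
    have intf_eq: "(\<integral>m. ?f (m j) \<partial>?Gk) = (\<integral>\<mu>. ?f \<mu> \<partial>\<Gamma>)" if "j \<in> {1..k}" for j
      using integral_distr[OF comp[OF that] fmeas] distr_j[OF that] by simp
    let ?G = "\<lambda>i x. if i \<in> {1..k\<^sub>1} then ?g x else 1"
    have prod_eq: "(\<Prod>i<k\<^sub>1. ?g (m (Suc i))) = (\<Prod>i\<in>{1..k}. ?G i (m i))" for m
    proof -
      have "(\<Prod>i\<in>{1..k}. ?G i (m i)) = (\<Prod>i\<in>{1..k} \<inter> {1..k\<^sub>1}. ?g (m i))"
        by (rule prod.inter_restrict[symmetric]) simp
      also have "{1..k} \<inter> {1..k\<^sub>1} = {Suc 0..k\<^sub>1}" using k1 by auto
      also have "(\<Prod>i\<in>{Suc 0..k\<^sub>1}. ?g (m i)) = (\<Prod>i<k\<^sub>1. ?g (m (Suc i)))"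
        by (rule prod.atLeast1_atMost_eq)
      finally show ?thesis by simp
    qed
    have intG: "integrable \<Gamma> (?G i)" for i
    proof (cases "i \<in> {1..k\<^sub>1}")
      case True
      then have "?G i = ?g" by (intro ext) simp
      then show ?thesis using intg by simp
    next
      case False
      then have "?G i = (\<lambda>_. 1)" by (intro ext) (simp only: False if_False)
      then show ?thesis using G.integrable_const by simp
    qed
    have intP: "integrable ?Gk (\<lambda>m. \<Prod>i\<in>{1..k}. ?G i (m i))"
      by (rule PS.product_integrable_prod[OF _ intG]) simp
    have intPeq: "(\<integral>m. (\<Prod>i\<in>{1..k}. ?G i (m i)) \<partial>?Gk) = (\<integral>\<mu>. ?g \<mu> \<partial>\<Gamma>) ^ k\<^sub>1"
    proof -
      have "(\<integral>m. (\<Prod>i\<in>{1..k}. ?G i (m i)) \<partial>?Gk) = (\<Prod>i\<in>{1..k}. (\<integral>x. ?G i x \<partial>\<Gamma>))"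
        by (rule PS.product_integral_prod[OF _ intG]) simp
      also have "\<dots> = (\<Prod>i\<in>{1..k}. if i \<in> {1..k\<^sub>1} then (\<integral>x. ?g x \<partial>\<Gamma>) else 1)"
        by (intro prod.cong refl) (simp add: G.prob_space)
      also have "\<dots> = (\<Prod>i\<in>{1..k} \<inter> {1..k\<^sub>1}. (\<integral>x. ?g x \<partial>\<Gamma>))"
        by (rule prod.inter_restrict[symmetric]) simp
      also have "{1..k} \<inter> {1..k\<^sub>1} = {1..k\<^sub>1}" using k1 by auto
      finally show ?thesis by simp
    qed
    let ?B = "\<lambda>m. real T * (\<Prod>i\<in>{1..k}. ?G i (m i)) + 3 * real T * \<delta> + (\<Sum>i<k\<^sub>1. ?f (m (Suc i)))"
    have intS: "integrable ?Gk (\<lambda>m. \<Sum>i<k\<^sub>1. ?f (m (Suc i)))"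
      by (intro Bochner_Integration.integrable_sum intf_j) (use k1 in auto)
    have intB: "integrable ?Gk ?B"
      by (intro Bochner_Integration.integrable_add integrable_mult_right intP
          finite_measure.integrable_const[OF fmGk] intS)
    have Bnn: "0 \<le> ?B m" if m: "m \<in> space ?Gk" for m
    proof -
      have "0 \<le> ?G i (m i)" if "i \<in> {1..k}" for i using h01[OF mspace[OF m that]] by simp
      then have "0 \<le> (\<Prod>i\<in>{1..k}. ?G i (m i))" by (intro prod_nonneg) auto
      moreover have "0 \<le> (\<Sum>i<k\<^sub>1. ?f (m (Suc i)))"
        by (intro sum_nonneg f_nn mspace[OF m]) (use k1 in auto)
      ultimately show ?thesis using \<delta>_pos by simp
    qed
    have bound: "sg_regret P (2 * \<delta>) k T m \<le> ?B m" if m: "m \<in> space ?Gk" for m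
    proof -
      have bl: "bandit P k T m \<delta>"
      proof (rule bandit.intro)
        show "prob_space (P \<mu>)" if "\<mu> \<in> {0..1}" for \<mu> using Pk[OF that] by blast
        show "sets (P \<mu>) = sets borel" if "\<mu> \<in> {0..1}" for \<mu> using Pk[OF that] by blast
        show "integrable (P \<mu>) (\<lambda>z. exp (s * (z - \<mu>))) \<and> (\<integral>z. exp (s * (z - \<mu>)) \<partial>P \<mu>) \<le> exp (s\<^sup>2 / 2)"
          if "\<mu> \<in> {0..1}" for \<mu> s using subg that by blast
        show "m i \<in> {0..1}" if "i \<in> {1..k}" for i by (rule mspace[OF m that])
      qed (use kpos T1 \<delta>_pos in auto)
      interpret B: bandit P k T m \<delta> by (rule bl)
      have "(\<Prod>i<k\<^sub>1. B.cfac i) = (\<Prod>i<k\<^sub>1. ?g (m (Suc i)))" by (simp add: B.cfac_def)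
      then show ?thesis using B.regret_bound[OF k1] prod_eq[of m] by simp
    qed
    have "sg_BR \<Gamma> P (2 * \<delta>) k T \<le> (\<integral>m. ?B m \<partial>?Gk)"
      unfolding sg_BR_def by (rule integral_mono'[OF intB bound Bnn])
    also have "(\<integral>m. ?B m \<partial>?Gk) = real T * (\<integral>\<mu>. ?g \<mu> \<partial>\<Gamma>) ^ k\<^sub>1 + 3 * real T * \<delta> + real k\<^sub>1 * (\<integral>\<mu>. ?f \<mu> \<partial>\<Gamma>)"
    proof -
      have a: "(\<integral>m. ?B m \<partial>?Gk) = (\<integral>m. real T * (\<Prod>i\<in>{1..k}. ?G i (m i)) + 3 * real T * \<delta> \<partial>?Gk)
          + (\<integral>m. (\<Sum>i<k\<^sub>1. ?f (m (Suc i))) \<partial>?Gk)"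
        by (rule Bochner_Integration.integral_add)
           (intro Bochner_Integration.integrable_add integrable_mult_right intP finite_measure.integrable_const[OF fmGk], rule intS)
      have b: "(\<integral>m. real T * (\<Prod>i\<in>{1..k}. ?G i (m i)) + 3 * real T * \<delta> \<partial>?Gk)
          = (\<integral>m. real T * (\<Prod>i\<in>{1..k}. ?G i (m i)) \<partial>?Gk) + (\<integral>m. 3 * real T * \<delta> \<partial>?Gk)"
        by (rule Bochner_Integration.integral_add)
           (intro integrable_mult_right intP, rule finite_measure.integrable_const[OF fmGk])
      have c: "(\<integral>m. real T * (\<Prod>i\<in>{1..k}. ?G i (m i)) \<partial>?Gk) = real T * (\<integral>\<mu>. ?g \<mu> \<partial>\<Gamma>) ^ k\<^sub>1"
        using intPeq by simp
      have d: "(\<integral>m. 3 * real T * \<delta> \<partial>?Gk) = 3 * real T * \<delta>" using prob_space.prob_space[OF pGk] by simp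
      have e: "(\<integral>m. (\<Sum>i<k\<^sub>1. ?f (m (Suc i))) \<partial>?Gk) = (\<Sum>i<k\<^sub>1. (\<integral>m. ?f (m (Suc i)) \<partial>?Gk))"
        by (rule Bochner_Integration.integral_sum) (rule intf_j, use k1 in auto)
      have f: "(\<Sum>i<k\<^sub>1. (\<integral>m. ?f (m (Suc i)) \<partial>?Gk)) = real k\<^sub>1 * (\<integral>\<mu>. ?f \<mu> \<partial>\<Gamma>)"
      proof -
        have "(\<Sum>i<k\<^sub>1. (\<integral>m. ?f (m (Suc i)) \<partial>?Gk)) = (\<Sum>i<k\<^sub>1. (\<integral>\<mu>. ?f \<mu> \<partial>\<Gamma>))"
          by (intro sum.cong refl intf_eq) (use k1 in auto)
        then show ?thesis by simp
      qed
      show ?thesis unfolding a b c d e f ..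
    qed
    also have "(\<integral>\<mu>. ?g \<mu> \<partial>\<Gamma>) = 1 - (\<integral>\<mu>. ?h \<mu> \<partial>\<Gamma>)"
      using Bochner_Integration.integral_diff[OF G.integrable_const inth] G.prob_space by simp
    finally show ?thesis .
  qed
qed


end
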